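(* Let $p$ be a prime, let $A$ be a set with $|A|=p^2$, and let $f:A\to A$ be a bijection. Then there exists a binary operation $*$ on $A$ such that $(A,* )$ is a group isomorphic to $\mathbb{Z}_p\times\mathbb{Z}_p$ and $f$ is an automorphism of $(A,* )$ if and only if $f$ is the identity map or the multiset of cycle lengths of $f$ is one of the following: (a) $\frac{p^2-1}{d}$ cycles of length $d$ together with one cycle of length $1$, for some positive divisor $d$ of $p^2-1$; (b) $\frac{p-1}{d}$ cycles of length $pd$, $\frac{p-1}{d}$ cycles of length $d$, and one cycle of length $1$, for some positive divisor $d$ of $p-1$; (c) $\frac{(p-1)^2}{\mathrm{lcm}(d_1,d_2)}$ cycles of length $\mathrm{lcm}(d_1,d_2)$, $\frac{p-1}{d_1}$ cycles of length $d_1$, $\frac{p-1}{d_2}$ cycles of length $d_2$, and one cycle of length $1$, for some positive divisors $d_1,d_2$ of $p-1$ (where cycles listed with equal lengths are counted together).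
   Context: For a bijection $f$ of a finite set, a cycle is a sequence $a_1,\dots,a_m$ of distinct elements with $f(a_j)=a_{j+1}$ for $j<m$ and $f(a_m)=a_1$; its length is $m$; every element lies in exactly one cycle, and fixed points are cycles of length $1$. *)

theory Defs
  imports "HOL-Algebra.Elementary_Groups" "HOL-Library.Multiset" "HOL-Computational_Algebra.Primes"
begin

definition cycle_of :: "('a \<Rightarrow> 'a) \<Rightarrow> 'a \<Rightarrow> 'a set" where
  "cycle_of f x = {(f ^^ n) x | n. True}"

definition cycle_lengths :: "('a \<Rightarrow> 'a) \<Rightarrow> 'a set \<Rightarrow> nat multiset" where
  "cycle_lengths f A = image_mset card (mset_set (cycle_of f ` A))"

definition mk_group :: "'a set \<Rightarrow> ('a \<Rightarrow> 'a \<Rightarrow> 'a) \<Rightarrow> 'a \<Rightarrow> 'a monoid" where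
  "mk_group A op e = \<lparr>carrier = A, monoid.mult = op, one = e\<rparr>"

end

theory Submission
  imports Defs "HOL-Number_Theory.Residue_Primitive_Roots"
begin



definition per :: "('a \<Rightarrow> 'a) \<Rightarrow> 'a \<Rightarrow> nat" where
  "per f x = (LEAST n. 0 < n \<and> (f ^^ n) x = x)"

locale perm_fin =
  fixes f :: "'a \<Rightarrow> 'a" and A :: "'a set"
  assumes bij: "bij_betw f A A" and fin: "finite A"
begin

lemma fA: "x \<in> A \<Longrightarrow> f x \<in> A"
  using bij bij_betwE by blast

lemma funpow_in: "x \<in> A \<Longrightarrow> (f ^^ n) x \<in> A"
  by (induction n) (auto simp: fA)

lemma inj_funpow: "inj_on (f ^^ n) A"
  using bij_betw_funpow[OF bij] bij_betw_def by blast

lemma exists_period_aux: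
  assumes x: "x \<in> A" and ij: "i < j" "(f ^^ i) x = (f ^^ j) x"
  shows "\<exists>n>0. (f ^^ n) x = x"
proof -
  have "(f ^^ i) ((f ^^ (j - i)) x) = (f ^^ i) x"
    using ij by (metis funpow_add le_add_diff_inverse less_imp_le o_apply)
  moreover have "(f ^^ (j - i)) x \<in> A" by (rule funpow_in[OF x])
  ultimately have "(f ^^ (j - i)) x = x"
    using inj_funpow[of i] x unfolding inj_on_def by blast
  thus ?thesis using ij(1) by (intro exI[of _ "j - i"]) auto
qed

lemma exists_period:
  assumes x: "x \<in> A" shows "\<exists>n>0. (f ^^ n) x = x"
proof -
  have sub: "(\<lambda>n. (f ^^ n) x) ` {0..card A} \<subseteq> A" using funpow_in x by auto
  have "\<not> inj_on (\<lambda>n. (f ^^ n) x) {0..card A}"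
  proof
    assume inj: "inj_on (\<lambda>n. (f ^^ n) x) {0..card A}"
    have "card ((\<lambda>n. (f ^^ n) x) ` {0..card A}) = Suc (card A)"
      using card_image[OF inj] by simp
    moreover have "card ((\<lambda>n. (f ^^ n) x) ` {0..card A}) \<le> card A"
      using card_mono[OF fin sub] .
    ultimately show False by simp
  qed
  then obtain i j where ij: "i \<noteq> j" "(f ^^ i) x = (f ^^ j) x"
    unfolding inj_on_def by blast
  show ?thesis
  proof (cases "i < j")
    case True show ?thesis by (rule exists_period_aux[OF x True ij(2)])
  next
    case False hence "j < i" using ij(1) by simp
    thus ?thesis using exists_period_aux[OF x _ ij(2)[symmetric]] by blast
  qed
qed

lemma per: assumes "x \<in> A" shows "0 < per f x" "(f ^^ per f x) x = x"
  using LeastI_ex[OF exists_period[OF assms]] unfolding per_def by auto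

lemma per_min: "0 < n \<Longrightarrow> n < per f x \<Longrightarrow> (f ^^ n) x \<noteq> x"
  unfolding per_def using not_less_Least by blast

lemma funpow_mult_per: assumes "x \<in> A" shows "(f ^^ (per f x * k)) x = x"
  by (induction k) (auto simp: funpow_add per[OF assms] simp del: funpow.simps(2))

lemma funpow_mod: assumes "x \<in> A" shows "(f ^^ n) x = (f ^^ (n mod per f x)) x"
proof -
  have "n = n mod per f x + per f x * (n div per f x)" by simp
  hence "(f ^^ n) x = (f ^^ (n mod per f x)) ((f ^^ (per f x * (n div per f x))) x)"
    by (metis funpow_add o_apply)
  thus ?thesis using funpow_mult_per[OF assms] by simp
qed

lemma fix_iff: assumes "x \<in> A" shows "(f ^^ n) x = x \<longleftrightarrow> per f x dvd n"
proof
  assume "(f ^^ n) x = x"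
  hence "(f ^^ (n mod per f x)) x = x" using funpow_mod[OF assms] by simp
  hence "n mod per f x = 0" using per_min[of "n mod per f x" x] per[OF assms]
    by (metis mod_less_divisor neq0_conv)
  thus "per f x dvd n" by auto
next
  assume "per f x dvd n" then show "(f ^^ n) x = x"
    using funpow_mult_per[OF assms] by auto
qed

lemma eq_iff_aux: assumes x: "x \<in> A" and le: "i \<le> j" and eq: "(f ^^ i) x = (f ^^ j) x"
  shows "i mod per f x = j mod per f x"
proof -
  have "(f ^^ i) ((f ^^ (j - i)) x) = (f ^^ i) x"
    using eq le by (metis funpow_add le_add_diff_inverse o_apply)
  moreover have "(f ^^ (j - i)) x \<in> A" by (rule funpow_in[OF x])
  ultimately have "(f ^^ (j - i)) x = x"
    using inj_funpow[of i] x unfolding inj_on_def by blast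
  hence "per f x dvd (j - i)" using fix_iff x by blast
  thus ?thesis using le by (metis mod_eq_dvd_iff_nat)
qed

lemma eq_iff: assumes x: "x \<in> A"
  shows "(f ^^ i) x = (f ^^ j) x \<longleftrightarrow> i mod per f x = j mod per f x"
proof
  assume "i mod per f x = j mod per f x"
  thus "(f ^^ i) x = (f ^^ j) x" using funpow_mod[OF x] by metis
next
  assume eq: "(f ^^ i) x = (f ^^ j) x"
  show "i mod per f x = j mod per f x"
  proof (cases "i \<le> j")
    case True show ?thesis by (rule eq_iff_aux[OF x True eq])
  next
    case False thus ?thesis using eq_iff_aux[OF x _ eq[symmetric]] by simp
  qed
qed

lemma cycle_eq: assumes x: "x \<in> A"
  shows "cycle_of f x = (\<lambda>k. (f ^^ k) x) ` {..<per f x}"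
proof -
  have "(f ^^ n) x \<in> (\<lambda>k. (f ^^ k) x) ` {..<per f x}" for n
    using funpow_mod[OF x, of n] per(1)[OF x] by auto
  thus ?thesis unfolding cycle_of_def by auto
qed

lemma card_cycle: assumes x: "x \<in> A" shows "card (cycle_of f x) = per f x"
proof -
  have "inj_on (\<lambda>k. (f ^^ k) x) {..<per f x}"
    unfolding inj_on_def using eq_iff[OF x] by auto
  thus ?thesis using cycle_eq[OF x] card_image by fastforce
qed

lemma cycle_sub: "x \<in> A \<Longrightarrow> cycle_of f x \<subseteq> A"
  unfolding cycle_of_def using funpow_in by auto

lemma in_cycle: "x \<in> cycle_of f x"
  unfolding cycle_of_def by (auto intro: exI[of _ 0])

lemma finite_cycle: "x \<in> A \<Longrightarrow> finite (cycle_of f x)"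
  using cycle_sub fin finite_subset by blast

lemma cycle_same: assumes x: "x \<in> A" and y: "y \<in> cycle_of f x"
  shows "cycle_of f y = cycle_of f x"
proof -
  obtain k where k: "y = (f ^^ k) x" using y unfolding cycle_of_def by auto
  have "(f ^^ n) y = (f ^^ (n + k)) x" for n by (simp add: k funpow_add)
  hence 1: "cycle_of f y \<subseteq> cycle_of f x" unfolding cycle_of_def by auto
  have "k \<le> per f x * k" using per(1)[OF x] by simp
  hence "(f ^^ (per f x * k - k)) y = x"
    using \<open>\<And>n. (f ^^ n) y = (f ^^ (n + k)) x\<close> funpow_mult_per[OF x] by simp
  hence "x = (f ^^ (per f x * k - k)) y" by simp
  hence "x \<in> cycle_of f y" unfolding cycle_of_def by blast
  then obtain na where na: "x = (f ^^ na) y" unfolding cycle_of_def by blast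
  have "(f ^^ n) x = (f ^^ (n + na)) y" for n by (simp add: na funpow_add)
  hence "(f ^^ n) x \<in> cycle_of f y" for n
    unfolding cycle_of_def by blast
  hence "cycle_of f x \<subseteq> cycle_of f y" unfolding cycle_of_def by auto
  with 1 show ?thesis by auto
qed

lemma cycle_f: assumes "x \<in> A" shows "cycle_of f (f x) = cycle_of f x"
  by (rule cycle_same[OF assms]) (auto simp: cycle_of_def intro!: exI[of _ 1])

lemma card_cycle_dvd: assumes x: "x \<in> A" and "\<And>k. (f ^^ k) x = x \<longleftrightarrow> m dvd k"
  shows "card (cycle_of f x) = m"
  using assms fix_iff[OF x] card_cycle[OF x] by (metis dvd_antisym dvd_refl)

lemma cycles_disjoint: "x \<in> A \<Longrightarrow> y \<in> A \<Longrightarrow> cycle_of f x \<noteq> cycle_of f y \<Longrightarrow>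
   cycle_of f x \<inter> cycle_of f y = {}"
  using cycle_same by (metis disjoint_iff)

definition inv_set where "inv_set S \<longleftrightarrow> S \<subseteq> A \<and> f ` S \<subseteq> S"

lemma inv_set_cycle: "inv_set S \<Longrightarrow> x \<in> S \<Longrightarrow> cycle_of f x \<subseteq> S"
proof -
  assume "inv_set S" "x \<in> S"
  hence "(f ^^ n) x \<in> S" for n by (induction n) (auto simp: inv_set_def)
  thus ?thesis unfolding cycle_of_def by auto
qed

lemma cl_union:
  assumes "inv_set S" "inv_set T" "S \<inter> T = {}"
  shows "cycle_lengths f (S \<union> T) = cycle_lengths f S + cycle_lengths f T"
proof -
  have fS: "finite S" "finite T" using assms fin finite_subset unfolding inv_set_def by blast+
  have "cycle_of f ` S \<inter> cycle_of f ` T = {}"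
    using inv_set_cycle[OF assms(1)] inv_set_cycle[OF assms(2)] assms(3) in_cycle by fastforce
  thus ?thesis unfolding cycle_lengths_def image_Un
    by (simp add: mset_set_Union fS)
qed

lemma cl_const:
  assumes S: "inv_set S" and m: "\<And>x. x \<in> S \<Longrightarrow> card (cycle_of f x) = m"
  shows "cycle_lengths f S = replicate_mset (card S div m) m \<and> m dvd card S"
proof -
  have fS: "finite S" using assms fin finite_subset unfolding inv_set_def by blast
  let ?C = "cycle_of f ` S"
  have U: "\<Union>?C = S" using inv_set_cycle[OF S] in_cycle by blast
  have pw: "pairwise disjnt ?C" unfolding pairwise_def disjnt_def
    using cycles_disjoint S unfolding inv_set_def by auto
  have "card S = sum card ?C"
    using card_Union_disjoint[OF pw] U finite_cycle S unfolding inv_set_def by fastforce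
  also have "\<dots> = sum (\<lambda>_. m) ?C" by (rule sum.cong) (auto simp: m)
  also have "\<dots> = card ?C * m" by simp
  finally have cS: "card S = card ?C * m" .
  have "cycle_lengths f S = image_mset (\<lambda>_. m) (mset_set ?C)"
    unfolding cycle_lengths_def using m fS by (intro image_mset_cong) auto
  also have "\<dots> = replicate_mset (card ?C) m" by (simp add: image_mset_const_eq)
  finally have eq: "cycle_lengths f S = replicate_mset (card ?C) m" .
  show ?thesis
  proof (cases "S = {}")
    case True thus ?thesis by (simp add: cycle_lengths_def)
  next
    case False
    then obtain x where x: "x \<in> S" by auto
    hence "x \<in> A" using S inv_set_def by auto
    hence "0 < m" using m[OF x] finite_cycle in_cycle
      by (metis card_gt_0_iff empty_iff)
    thus ?thesis using eq cS by simp
  qed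
qed

lemma inv_set_bij: "inv_set S \<Longrightarrow> bij_betw f S S"
  unfolding inv_set_def bij_betw_def
  using endo_inj_surj[of S f] fin finite_subset inj_on_subset bij bij_betw_def by metis

lemma inv_set_compl: assumes "inv_set S" shows "inv_set (A - S)"
proof -
  have "f ` (A - S) \<subseteq> A - S"
  proof
    fix y assume "y \<in> f ` (A - S)"
    then obtain z where z: "z \<in> A" "z \<notin> S" "y = f z" by auto
    have fS: "f ` S = S" using inv_set_bij[OF assms] by (rule bij_betw_imp_surj_on)
    have inj: "inj_on f A" using bij by (rule bij_betw_imp_inj_on)
    have "y \<notin> S"
    proof
      assume "y \<in> S"
      then obtain s where s: "s \<in> S" "y = f s" using fS by (metis imageE)
      hence "s \<in> A" using assms unfolding inv_set_def by auto
      hence "z = s" using inj z(1,3) s(2) by (metis inj_onD)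
      thus False using z(2) s(1) by simp
    qed
    thus "y \<in> A - S" using z fA by simp
  qed
  thus ?thesis unfolding inv_set_def by auto
qed

lemma inv_set_A: "inv_set A" unfolding inv_set_def using fA by auto

lemma inv_set_cycle': "x \<in> A \<Longrightarrow> inv_set (cycle_of f x)"
proof -
  assume x: "x \<in> A"
  have "f y \<in> cycle_of f x" if y: "y \<in> cycle_of f x" for y
  proof -
    have "f y \<in> cycle_of f y" unfolding cycle_of_def by (auto intro!: exI[of _ 1])
    thus ?thesis using cycle_same[OF x y] by simp
  qed
  thus ?thesis unfolding inv_set_def using cycle_sub[OF x] by blast
qed

end

lemma cl_conj:
  assumes pf: "perm_fin f A" and h: "bij_betw h A B" and c: "\<And>x. x \<in> A \<Longrightarrow> h (f x) = g (h x)"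
  shows "cycle_lengths g B = cycle_lengths f A"
proof -
  interpret perm_fin f A by fact
  have it: "(g ^^ n) (h x) = h ((f ^^ n) x)" if "x \<in> A" for x n
    using that by (induction n) (auto simp: c funpow_in)
  have cyc: "cycle_of g (h x) = h ` cycle_of f x" if "x \<in> A" for x
    unfolding cycle_of_def using it[OF that] by auto
  have "cycle_of g ` B = image h ` (cycle_of f ` A)"
    using h cyc unfolding bij_betw_def by auto
  moreover have "inj_on (image h) (cycle_of f ` A)"
    using inj_on_image_Pow[of h A] h cycle_sub unfolding bij_betw_def
    by (meson PowI image_subsetI inj_on_subset)
  ultimately have "mset_set (cycle_of g ` B) = image_mset (image h) (mset_set (cycle_of f ` A))"
    by (simp add: image_mset_mset_set)
  hence "cycle_lengths g B = image_mset (card \<circ> image h) (mset_set (cycle_of f ` A))"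
    unfolding cycle_lengths_def by (simp add: multiset.map_comp)
  also have "\<dots> = cycle_lengths f A" unfolding cycle_lengths_def
  proof (intro image_mset_cong)
    fix c assume "c \<in># mset_set (cycle_of f ` A)"
    hence "c \<in> cycle_of f ` A" using fin by (simp)
    then obtain x where x: "x \<in> A" "c = cycle_of f x" by auto
    have "inj_on h c" using h cycle_sub[OF x(1)] x(2) unfolding bij_betw_def
      using inj_on_subset by blast
    thus "(card \<circ> image h) c = card c" by (simp add: card_image)
  qed
  finally show ?thesis .
qed



lemma cl_single:
  assumes "perm_fin f A" "x \<in> A"
  shows "cycle_lengths f (cycle_of f x) = {#card (cycle_of f x)#}"
proof -
  interpret perm_fin f A by fact
  have "cycle_of f ` cycle_of f x = (\<lambda>_. cycle_of f x) ` cycle_of f x"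
    by (rule image_cong) (auto simp: cycle_same[OF assms(2)])
  also have "\<dots> = {cycle_of f x}" using in_cycle by auto
  finally have "cycle_of f ` cycle_of f x = {cycle_of f x}" .
  thus ?thesis unfolding cycle_lengths_def by simp
qed

lemma conj_exists:
  assumes "perm_fin f A" "perm_fin g B" "cycle_lengths f A = cycle_lengths g B"
  shows "\<exists>h. bij_betw h A B \<and> (\<forall>x\<in>A. h (f x) = g (h x))"
  using assms
proof (induction "card A" arbitrary: A B rule: less_induct)
  case less
  interpret F: perm_fin f A by fact
  interpret G: perm_fin g B by fact
  show ?case
  proof (cases "A = {}")
    case True
    hence "cycle_lengths g B = {#}" using less.prems(3) by (simp add: cycle_lengths_def)
    hence "mset_set (cycle_of g ` B) = {#}" unfolding cycle_lengths_def by simp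
    hence "cycle_of g ` B = {}" using G.fin by (simp add: mset_set_empty_iff)
    hence "B = {}" by simp
    thus ?thesis using True by (auto simp: bij_betw_def)
  next
    case False
    then obtain x where x: "x \<in> A" by auto
    define C where "C = cycle_of f x"
    define m where "m = card C"
    have "m \<in># cycle_lengths f A" unfolding cycle_lengths_def m_def C_def
      using x F.fin by auto
    hence "m \<in># cycle_lengths g B" using less.prems(3) by simp
    then obtain y where y: "y \<in> B" "card (cycle_of g y) = m"
      unfolding cycle_lengths_def using G.fin by auto
    define D where "D = cycle_of g y"
    have iC: "F.inv_set C" unfolding C_def by (rule F.inv_set_cycle'[OF x])
    have iD: "G.inv_set D" unfolding D_def by (rule G.inv_set_cycle'[OF y(1)])
    have iA': "F.inv_set (A - C)" by (rule F.inv_set_compl[OF iC])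
    have iB': "G.inv_set (B - D)" by (rule G.inv_set_compl[OF iD])
    have CA: "C \<subseteq> A" "D \<subseteq> B" using iC iD F.inv_set_def G.inv_set_def by auto
    have UA: "A = C \<union> (A - C)" "B = D \<union> (B - D)" using CA by auto
    have "cycle_lengths f A = {#m#} + cycle_lengths f (A - C)"
      using F.cl_union[OF iC iA'] UA(1) cl_single[OF less.prems(1) x] C_def m_def by auto
    moreover have "cycle_lengths g B = {#m#} + cycle_lengths g (B - D)"
      using G.cl_union[OF iD iB'] UA(2) cl_single[OF less.prems(2) y(1)] D_def y(2) by auto
    ultimately have cl': "cycle_lengths f (A - C) = cycle_lengths g (B - D)"
      using less.prems(3) by simp
    have pA': "perm_fin f (A - C)"
      using F.inv_set_bij[OF iA'] F.fin by unfold_locales auto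
    have pB': "perm_fin g (B - D)"
      using G.inv_set_bij[OF iB'] G.fin by unfold_locales auto
    have "x \<in> C" unfolding C_def by (rule F.in_cycle)
    hence "card (A - C) < card A" using x F.fin
      by (intro psubset_card_mono) auto
    from less.hyps[OF this pA' pB' cl'] obtain h' where
      h': "bij_betw h' (A - C) (B - D)" "\<forall>z\<in>A - C. h' (f z) = g (h' z)" by blast
    define hC where "hC z = (g ^^ (SOME k. z = (f ^^ k) x)) y" for z
    have perf: "per f x = m" using F.card_cycle[OF x] m_def C_def by simp
    have perg: "per g y = m" using G.card_cycle[OF y(1)] y(2) by simp
    have hCk: "hC ((f ^^ k) x) = (g ^^ k) y" for k
    proof -
      define k' where "k' = (SOME k'. (f ^^ k) x = (f ^^ k') x)"
      have "(f ^^ k) x = (f ^^ k') x" unfolding k'_def by (rule someI[of _ k]) simp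
      hence "k' mod m = k mod m" using F.eq_iff[OF x] perf by simp
      hence "(g ^^ k') y = (g ^^ k) y" using G.eq_iff[OF y(1)] perg by simp
      thus ?thesis unfolding hC_def k'_def by simp
    qed
    have hCim: "hC ` C = D"
    proof -
      have "hC ` C = {hC ((f ^^ k) x) | k. True}" unfolding C_def cycle_of_def by auto
      also have "\<dots> = D" unfolding D_def cycle_of_def hCk by simp
      finally show ?thesis .
    qed
    have cCD: "card C = card D" using y(2) m_def D_def by simp
    have finC: "finite C" using CA F.fin finite_subset by blast
    have bC: "bij_betw hC C D" unfolding bij_betw_def
      using hCim eq_card_imp_inj_on[OF finC, of hC] cCD by simp
    define h where "h z = (if z \<in> C then hC z else h' z)" for z
    have b1: "bij_betw h C D" using bC by (rule bij_betw_cong[THEN iffD1, rotated]) (simp add: h_def)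
    have b2: "bij_betw h (A - C) (B - D)" using h'(1)
      by (rule bij_betw_cong[THEN iffD1, rotated]) (simp add: h_def)
    have "bij_betw h (C \<union> (A - C)) (D \<union> (B - D))"
      by (rule bij_betw_combine[OF b1 b2]) auto
    hence bh: "bij_betw h A B" using UA by simp
    have comm: "h (f z) = g (h z)" if z: "z \<in> A" for z
    proof (cases "z \<in> C")
      case True
      then obtain k where k: "z = (f ^^ k) x" unfolding C_def cycle_of_def by auto
      have fz: "f z = (f ^^ Suc k) x" using k by simp
      have "f z \<in> C" using fz unfolding C_def cycle_of_def by blast
      hence "h (f z) = hC (f z)" using h_def by simp
      also have "\<dots> = (g ^^ Suc k) y" unfolding fz by (rule hCk)
      also have "\<dots> = g (h z)" using True k hCk h_def by simp
      finally show ?thesis .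
    next
      case False
      hence "z \<in> A - C" using z by simp
      moreover hence "f z \<in> A - C" using iA' unfolding F.inv_set_def by auto
      ultimately show ?thesis using h'(2) h_def by auto
    qed
    show ?thesis using bh comm by blast
  qed
qed



definition VV :: "nat \<Rightarrow> (int \<times> int) set" where
  "VV p = {0..<int p} \<times> {0..<int p}"
definition vadd :: "nat \<Rightarrow> int \<times> int \<Rightarrow> int \<times> int \<Rightarrow> int \<times> int" where
  "vadd p u w = ((fst u + fst w) mod int p, (snd u + snd w) mod int p)"
definition smul :: "nat \<Rightarrow> int \<Rightarrow> int \<times> int \<Rightarrow> int \<times> int" where
  "smul p c u = ((c * fst u) mod int p, (c * snd u) mod int p)"
definition Phi :: "nat \<Rightarrow> int \<times> int \<Rightarrow> int \<times> int \<Rightarrow> int \<times> int \<Rightarrow> int \<times> int" where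
  "Phi p v w z = vadd p (smul p (fst z) v) (smul p (snd z) w)"
definition det :: "int \<times> int \<Rightarrow> int \<times> int \<Rightarrow> int" where
  "det v w = fst v * snd w - snd v * fst w"
definition linmap :: "nat \<Rightarrow> (int \<times> int \<Rightarrow> int \<times> int) \<Rightarrow> bool" where
  "linmap p g \<longleftrightarrow> (\<forall>u\<in>VV p. g u \<in> VV p) \<and>
     (\<forall>u\<in>VV p. \<forall>w\<in>VV p. g (vadd p u w) = vadd p (g u) (g w))"

locale fp =
  fixes p :: nat
  assumes prime: "prime p"
begin

lemma p_gt: "1 < p" "1 < int p" "0 < int p"
proof -
  show "1 < p" using prime_gt_1_nat[OF prime] .
  thus "1 < int p" "0 < int p" by simp_all
qed

lemma prime_int: "prime (int p)" using prime by simp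

lemma pdvd_mult: "int p dvd a * b \<longleftrightarrow> int p dvd a \<or> int p dvd b"
  using prime_int prime_dvd_mult_iff by blast

lemma mem_VV: "(a, b) \<in> VV p \<longleftrightarrow> 0 \<le> a \<and> a < int p \<and> 0 \<le> b \<and> b < int p"
  by (auto simp: VV_def)

lemma range_eq: "0 \<le> x \<Longrightarrow> x < int p \<Longrightarrow> 0 \<le> y \<Longrightarrow> y < int p \<Longrightarrow> int p dvd x - y \<Longrightarrow> x = y"
  by (metis mod_eq_dvd_iff mod_pos_pos_trivial)

lemma range_zero: "0 \<le> x \<Longrightarrow> x < int p \<Longrightarrow> int p dvd x \<Longrightarrow> x = 0"
  using range_eq[of x 0] p_gt by simp

lemma mod_in: "0 \<le> x mod int p" "x mod int p < int p"
  using p_gt by auto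

lemma vadd_in [simp]: "vadd p u w \<in> VV p"
  by (simp add: vadd_def VV_def mod_in)

lemma smul_in [simp]: "smul p c u \<in> VV p"
  by (simp add: smul_def VV_def mod_in)

lemma Phi_in [simp]: "Phi p v w z \<in> VV p"
  by (simp add: Phi_def)

lemma VV_mod: "u \<in> VV p \<Longrightarrow> fst u mod int p = fst u \<and> snd u mod int p = snd u"
  by (cases u) (auto simp: VV_def)

lemma zero_in [simp]: "(0, 0) \<in> VV p" using p_gt by (simp add: VV_def)

lemma finite_VV [simp]: "finite (VV p)" by (simp add: VV_def)

lemma card_VV: "card (VV p) = p ^ 2"
  by (simp add: VV_def card_cartesian_product power2_eq_square)

lemma inverse_ex: assumes "\<not> int p dvd a" shows "\<exists>i. (a * i) mod int p = 1"
proof -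
  have "coprime a (int p)" using prime_imp_coprime[OF prime_int assms] by (simp add: coprime_commute)
  then obtain i where "[a * i = 1] (mod int p)" using cong_solve_coprime_int by blast
  thus ?thesis using p_gt by (auto simp: cong_def)
qed

lemma smul_mod: "smul p (c mod int p) u = smul p c u"
  by (simp add: smul_def mod_simps)

lemma smul_smul: "smul p c (smul p d u) = smul p (c * d) u"
  by (simp add: smul_def mod_simps mult.assoc)

lemma smul_VV_1: assumes "u \<in> VV p" shows "smul p 1 u = u"
  by (simp add: smul_def prod_eq_iff VV_mod[OF assms])

lemma smul_0: "smul p 0 u = (0, 0)"
  by (simp add: smul_def)

lemma vadd_0: assumes "u \<in> VV p" shows "vadd p (0,0) u = u"
  by (simp add: vadd_def prod_eq_iff VV_mod[OF assms])

lemma smul_Suc: assumes "u \<in> VV p" shows "smul p (int (Suc n)) u = vadd p u (smul p (int n) u)"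
proof -
  have "((1 + int n) * fst u) mod int p = (fst u + (int n * fst u) mod int p) mod int p"
    "((1 + int n) * snd u) mod int p = (snd u + (int n * snd u) mod int p) mod int p"
    by (simp_all add: mod_simps algebra_simps)
  thus ?thesis by (simp add: smul_def vadd_def)
qed

lemma smul_vadd: "smul p c (vadd p u w) = vadd p (smul p c u) (smul p c w)"
  by (simp add: smul_def vadd_def mod_simps algebra_simps)

lemma mm: "(x * (a mod m) + y * (b mod m)) mod m = (x * a + y * b) mod (m::int)"
  by (metis mod_add_eq mod_mult_right_eq)

lemma mm': "((a mod m) * x + (b mod m) * y) mod m = (a * x + b * y) mod (m::int)"
  by (metis mod_add_eq mod_mult_left_eq)

lemma Phi_pair: "Phi p v w (x, y) =
   ((x * fst v + y * fst w) mod int p, (x * snd v + y * snd w) mod int p)"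
  by (simp add: Phi_def vadd_def smul_def mod_simps)

lemma Phi_inj:
  assumes v: "v \<in> VV p" and w: "w \<in> VV p" and d: "\<not> int p dvd det v w"
  shows "inj_on (Phi p v w) (VV p)"
proof
  fix z z' assume z: "z \<in> VV p" and z': "z' \<in> VV p" and eq: "Phi p v w z = Phi p v w z'"
  obtain x y where xy: "z = (x, y)" by (cases z)
  obtain x' y' where xy': "z' = (x', y')" by (cases z')
  define X where "X = x - x'"
  define Y where "Y = y - y'"
  have e1: "int p dvd X * fst v + Y * fst w"
    using eq unfolding xy xy' Phi_pair X_def Y_def
    by (simp add: mod_eq_dvd_iff algebra_simps)
  have e2: "int p dvd X * snd v + Y * snd w"
    using eq unfolding xy xy' Phi_pair X_def Y_def
    by (simp add: mod_eq_dvd_iff algebra_simps)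
  have "X * det v w = snd w * (X * fst v + Y * fst w) - fst w * (X * snd v + Y * snd w)"
    by (simp add: det_def algebra_simps)
  hence "int p dvd X * det v w" using e1 e2 by simp
  hence "int p dvd X" using d pdvd_mult by blast
  hence "x = x'" using z z' unfolding xy xy' X_def by (auto simp: mem_VV intro: range_eq)
  have "Y * det v w = fst v * (X * snd v + Y * snd w) - snd v * (X * fst v + Y * fst w)"
    by (simp add: det_def algebra_simps)
  hence "int p dvd Y * det v w" using e1 e2 by simp
  hence "int p dvd Y" using d pdvd_mult by blast
  hence "y = y'" using z z' unfolding xy xy' Y_def by (auto simp: mem_VV intro: range_eq)
  show "z = z'" using \<open>x = x'\<close> \<open>y = y'\<close> xy xy' by simp
qed

lemma endo_bij: assumes "inj_on h (VV p)" "\<And>u. u \<in> VV p \<Longrightarrow> h u \<in> VV p"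
  shows "bij_betw h (VV p) (VV p)"
proof -
  have "h ` VV p \<subseteq> VV p" using assms(2) by blast
  hence "h ` VV p = VV p" using endo_inj_surj[OF finite_VV _ assms(1)] by blast
  thus ?thesis using assms(1) unfolding bij_betw_def by blast
qed

lemma Phi_bij:
  assumes "v \<in> VV p" "w \<in> VV p" "\<not> int p dvd det v w"
  shows "bij_betw (Phi p v w) (VV p) (VV p)"
  using Phi_inj[OF assms] by (intro endo_bij) auto

lemma indep_det:
  assumes v: "v \<in> VV p" "v \<noteq> (0, 0)" and w: "w \<in> VV p" and nw: "\<And>c. w \<noteq> smul p c v"
  shows "\<not> int p dvd det v w"
proof
  assume dv: "int p dvd det v w"
  obtain v1 v2 where vv: "v = (v1, v2)" by (cases v)
  obtain w1 w2 where ww: "w = (w1, w2)" by (cases w)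
  have rng: "0 \<le> v1" "v1 < int p" "0 \<le> v2" "v2 < int p" "0 \<le> w1" "w1 < int p" "0 \<le> w2" "w2 < int p"
    using v w by (auto simp: vv ww mem_VV)
  have dv': "int p dvd v1 * w2 - v2 * w1" using dv by (simp add: det_def vv ww)
  show False
  proof (cases "v1 = 0")
    case False
    hence "\<not> int p dvd v1" using rng range_zero by blast
    then obtain i where i: "(v1 * i) mod int p = 1" using inverse_ex by blast
    have "smul p (w1 * i) v = w"
    proof -
      have "(w1 * i * v1) mod int p = (w1 * ((v1 * i) mod int p)) mod int p"
        by (simp add: mod_simps algebra_simps)
      hence a: "(w1 * i * v1) mod int p = w1" using i rng by simp
      have "(w1 * i * v2) mod int p = (i * (v2 * w1)) mod int p" by (simp add: algebra_simps)
      also have "\<dots> = (i * (v1 * w2)) mod int p"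
        using dv' by (metis mod_eq_dvd_iff mod_mult_right_eq)
      also have "\<dots> = (w2 * ((v1 * i) mod int p)) mod int p"
        by (simp add: mod_simps algebra_simps)
      also have "\<dots> = w2" using i rng by simp
      finally show ?thesis using a by (simp add: smul_def vv ww)
    qed
    thus False using nw by metis
  next
    case True
    hence "v2 \<noteq> 0" using v vv by auto
    hence "\<not> int p dvd v2" using rng range_zero by blast
    then obtain i where i: "(v2 * i) mod int p = 1" using inverse_ex by blast
    have "int p dvd v2 * w1" using dv' True by (simp add: dvd_minus_iff)
    hence "int p dvd w1" using pdvd_mult \<open>\<not> int p dvd v2\<close> by blast
    hence w10: "w1 = 0" using rng range_zero by blast
    have "smul p (w2 * i) v = w"
    proof -
      have "(w2 * i * v2) mod int p = (w2 * ((v2 * i) mod int p)) mod int p"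
        by (simp add: mod_simps algebra_simps)
      hence "(w2 * i * v2) mod int p = w2" using i rng by simp
      thus ?thesis using True w10 by (simp add: smul_def vv ww)
    qed
    thus False using nw by metis
  qed
qed

end



definition Dm :: "nat \<Rightarrow> int \<Rightarrow> int \<Rightarrow> int \<times> int \<Rightarrow> int \<times> int" where
  "Dm p l m z = ((l * fst z) mod int p, (m * snd z) mod int p)"
definition Jm :: "nat \<Rightarrow> int \<Rightarrow> int \<times> int \<Rightarrow> int \<times> int" where
  "Jm p l z = ((l * fst z + snd z) mod int p, (l * snd z) mod int p)"

context fp begin

lemma lin_in: "linmap p g \<Longrightarrow> u \<in> VV p \<Longrightarrow> g u \<in> VV p"
  by (simp add: linmap_def)

lemma lin_add: "linmap p g \<Longrightarrow> u \<in> VV p \<Longrightarrow> w \<in> VV p \<Longrightarrow> g (vadd p u w) = vadd p (g u) (g w)"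
  by (simp add: linmap_def)

lemma lin_zero: assumes g: "linmap p g" shows "g (0, 0) = (0, 0)"
proof -
  have "vadd p (0,0) (0,0) = (0,0)" by (simp add: vadd_def)
  hence e: "g (0,0) = vadd p (g (0,0)) (g (0,0))" using lin_add[OF g zero_in zero_in] by simp
  obtain a b where ab: "g (0,0) = (a, b)" by (cases "g (0,0)")
  have r: "0 \<le> a" "a < int p" "0 \<le> b" "b < int p" using lin_in[OF g zero_in] ab by (auto simp: mem_VV)
  have "(a + a) mod int p = a mod int p" "(b + b) mod int p = b mod int p"
    using e ab r by (auto simp: vadd_def)
  hence "int p dvd a" "int p dvd b" by (auto simp: mod_eq_dvd_iff)
  hence "a = 0" "b = 0" using r range_zero by auto
  thus ?thesis using ab by simp
qed

lemma lin_smul_nat: assumes g: "linmap p g" and u: "u \<in> VV p"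
  shows "g (smul p (int n) u) = smul p (int n) (g u)"
proof (induction n)
  case 0 thus ?case using lin_zero[OF g] by (simp add: smul_def)
next
  case (Suc n)
  have "g (smul p (int (Suc n)) u) = g (vadd p u (smul p (int n) u))" using smul_Suc[OF u] by simp
  also have "\<dots> = vadd p (g u) (smul p (int n) (g u))" using lin_add[OF g u smul_in] Suc by simp
  also have "\<dots> = smul p (int (Suc n)) (g u)" using smul_Suc[OF lin_in[OF g u]] by simp
  finally show ?case .
qed

lemma lin_smul: assumes g: "linmap p g" and u: "u \<in> VV p"
  shows "g (smul p c u) = smul p c (g u)"
proof -
  obtain n where n: "c mod int p = int n" using mod_in(1)[of c] nonneg_eq_int by metis
  have "smul p c u = smul p (int n) u" "smul p c (g u) = smul p (int n) (g u)"
    using smul_mod n by metis+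
  thus ?thesis using lin_smul_nat[OF g u] by simp
qed

lemma lin_Phi: assumes g: "linmap p g" and v: "v \<in> VV p" and w: "w \<in> VV p"
  shows "g (Phi p v w z) = Phi p (g v) (g w) z"
  unfolding Phi_def using lin_add[OF g smul_in smul_in] lin_smul[OF g v] lin_smul[OF g w] by simp

lemma lin_comp: "linmap p g \<Longrightarrow> linmap p h \<Longrightarrow> linmap p (g \<circ> h)"
  by (simp add: linmap_def)

lemma lin_id: "linmap p (\<lambda>z. z)"
  by (simp add: linmap_def)

lemma lin_funpow: "linmap p g \<Longrightarrow> linmap p (g ^^ k)"
proof (induction k)
  case 0 thus ?case using lin_id by (simp add: id_def)
next
  case (Suc k) thus ?case using lin_comp[of g "g ^^ k"] by (simp only: funpow.simps(2))
qed

lemma conjD: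
  assumes g: "linmap p g" and v: "v \<in> VV p" and w: "w \<in> VV p"
    and gv: "g v = smul p l v" and gw: "g w = smul p m w"
  shows "g (Phi p v w z) = Phi p v w (Dm p l m z)"
  using lin_Phi[OF g v w] gv gw
  by (simp add: Phi_def Dm_def smul_mod smul_smul mult.commute)

lemma conjJ:
  assumes g: "linmap p g" and v: "v \<in> VV p" and w: "w \<in> VV p"
    and gv: "g v = smul p l v" and gw: "g w = vadd p v (smul p l w)"
  shows "g (Phi p v w z) = Phi p v w (Jm p l z)"
proof -
  obtain x y where z: "z = (x, y)" by (cases z)
  have "g (Phi p v w z) = Phi p (g v) (g w) z" by (rule lin_Phi[OF g v w])
  also have "\<dots> = ((x * (l * fst v) + y * (fst v + l * fst w)) mod int p,
                     (x * (l * snd v) + y * (snd v + l * snd w)) mod int p)"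
  proof -
    have gw': "g w = ((fst v + l * fst w) mod int p, (snd v + l * snd w) mod int p)"
      using gw by (simp add: vadd_def smul_def mod_simps)
    show ?thesis unfolding z gv gw' Phi_pair by (simp add: smul_def mm)
  qed
  also have "\<dots> = (((l * x + y) * fst v + (l * y) * fst w) mod int p,
                     ((l * x + y) * snd v + (l * y) * snd w) mod int p)"
    by (simp add: algebra_simps)
  also have "\<dots> = Phi p v w (Jm p l z)"
    unfolding z Jm_def Phi_pair by (simp add: mm')
  finally show ?thesis .
qed

lemma conj_inj:
  assumes "inj_on g (VV p)" "inj_on Phi' (VV p)" "\<And>z. z \<in> VV p \<Longrightarrow> Phi' z \<in> VV p"
    "\<And>z. z \<in> VV p \<Longrightarrow> D z \<in> VV p"
    "\<And>z. z \<in> VV p \<Longrightarrow> g (Phi' z) = Phi' (D z)"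
  shows "inj_on D (VV p)"
proof
  fix z z' assume z: "z \<in> VV p" "z' \<in> VV p" "D z = D z'"
  hence "g (Phi' z) = g (Phi' z')" using assms(5) by metis
  thus "z = z'" using assms z unfolding inj_on_def by metis
qed

lemma pow_nz: "\<not> int p dvd l \<Longrightarrow> \<not> int p dvd l ^ k"
  using prime_int prime_dvd_power by blast

lemma ordp: assumes "0 < l" "l < int p"
  shows "int p dvd l ^ k - 1 \<longleftrightarrow> ord p (nat l) dvd k"
proof -
  have "int p dvd l ^ k - 1 \<longleftrightarrow> [l ^ k = 1] (mod int p)" by (simp add: cong_iff_dvd_diff)
  also have "\<dots> \<longleftrightarrow> [int (nat l ^ k) = int 1] (mod int p)" using assms by simp
  also have "\<dots> \<longleftrightarrow> [nat l ^ k = 1] (mod p)" by (rule cong_int_iff)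
  also have "\<dots> \<longleftrightarrow> ord p (nat l) dvd k" by (rule ord_divides)
  finally show ?thesis .
qed

lemma ordp_props: assumes "0 < l" "l < int p"
  shows "0 < ord p (nat l)" "ord p (nat l) dvd p - 1"
proof -
  have "\<not> p dvd nat l" using assms by (auto dest: dvd_imp_le)
  hence c: "coprime p (nat l)" using prime prime_imp_coprime by blast
  thus "0 < ord p (nat l)" by simp
  show "ord p (nat l) dvd p - 1" using order_divides_totient[OF c] totient_prime[OF prime] by simp
qed

lemma scal_fix: assumes "0 \<le> x" "x < int p"
  shows "(a * x) mod int p = x \<longleftrightarrow> x = 0 \<or> int p dvd a - 1"
proof -
  have "(a * x) mod int p = x \<longleftrightarrow> (a * x) mod int p = x mod int p" using assms by simp
  also have "\<dots> \<longleftrightarrow> int p dvd (a - 1) * x" by (simp add: mod_eq_dvd_iff algebra_simps)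
  also have "\<dots> \<longleftrightarrow> int p dvd a - 1 \<or> int p dvd x" by (rule pdvd_mult)
  also have "\<dots> \<longleftrightarrow> x = 0 \<or> int p dvd a - 1" using assms range_zero by auto
  finally show ?thesis .
qed

lemma Dm_pow: "z \<in> VV p \<Longrightarrow> (Dm p l m ^^ k) z = ((l ^ k * fst z) mod int p, (m ^ k * snd z) mod int p)"
proof (induction k)
  case 0 thus ?case using VV_mod by (cases z) auto
next
  case (Suc k) thus ?case by (simp add: Dm_def mod_simps algebra_simps)
qed

lemma Jm_pow: "z \<in> VV p \<Longrightarrow> (Jm p l ^^ k) z =
   ((l ^ k * fst z + int k * l ^ (k - 1) * snd z) mod int p, (l ^ k * snd z) mod int p)"
proof (induction k)
  case 0 thus ?case using VV_mod by (cases z) auto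
next
  case (Suc k)
  have e: "int k * (l * l ^ (k - 1)) = int k * l ^ k" by (cases k) auto
  have "(l * (l ^ k * fst z + int k * l ^ (k - 1) * snd z) + l ^ k * snd z) mod int p
      = (l ^ Suc k * fst z + int (Suc k) * l ^ (Suc k - 1) * snd z) mod int p"
  proof -
    have "l * (l ^ k * fst z + int k * l ^ (k - 1) * snd z) + l ^ k * snd z
        = l ^ Suc k * fst z + (int k * (l * l ^ (k - 1))) * snd z + l ^ k * snd z"
      by (simp add: algebra_simps)
    also have "\<dots> = l ^ Suc k * fst z + int k * l ^ k * snd z + l ^ k * snd z"
      using e by simp
    also have "\<dots> = l ^ Suc k * fst z + int (Suc k) * l ^ (Suc k - 1) * snd z"
      by (simp add: algebra_simps)
    finally show ?thesis by simp
  qed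
  have ma: "(a * (b mod m) + c mod m) mod m = (a * b + c) mod (m::int)" for a b c m
  proof -
    have "(a * (b mod m) + c mod m) mod m = (a * (b mod m) + c) mod m" by (simp add: mod_add_right_eq)
    also have "\<dots> = ((a * (b mod m)) mod m + c) mod m" by (simp add: mod_add_left_eq)
    also have "\<dots> = ((a * b) mod m + c) mod m" by (simp add: mod_mult_right_eq)
    also have "\<dots> = (a * b + c) mod m" by (simp add: mod_add_left_eq)
    finally show ?thesis .
  qed
  have "(Jm p l ^^ Suc k) z = Jm p l ((Jm p l ^^ k) z)" by simp
  also have "\<dots> = ((l * (l ^ k * fst z + int k * l ^ (k - 1) * snd z) + l ^ k * snd z) mod int p,
      (l * (l ^ k * snd z)) mod int p)"
    unfolding Suc.IH[OF Suc.prems] Jm_def by (simp add: ma mod_mult_right_eq)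
  also have "\<dots> = ((l ^ Suc k * fst z + int (Suc k) * l ^ (Suc k - 1) * snd z) mod int p,
      (l ^ Suc k * snd z) mod int p)"
    using \<open>(l * (l ^ k * fst z + int k * l ^ (k - 1) * snd z) + l ^ k * snd z) mod int p = _\<close>
    by (simp add: mult.assoc)
  finally show ?case .
qed

end



context perm_fin begin
lemma inv_set_Un: "inv_set S \<Longrightarrow> inv_set T \<Longrightarrow> inv_set (S \<union> T)"
  by (auto simp: inv_set_def)
lemma inv_setI: "S \<subseteq> A \<Longrightarrow> (\<And>x. x \<in> S \<Longrightarrow> f x \<in> S) \<Longrightarrow> inv_set S"
  by (auto simp: inv_set_def)
end

context fp begin

lemma nz_ndvd: assumes "0 < x" "x < int p" shows "\<not> int p dvd x"
proof
  assume "int p dvd x"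
  hence "x = 0" using range_zero[of x] assms by simp
  thus False using assms by simp
qed

lemma scal_nz: "0 < l \<Longrightarrow> l < int p \<Longrightarrow> 0 < x \<Longrightarrow> x < int p \<Longrightarrow> 0 < (l * x) mod int p"
proof -
  assume a: "0 < l" "l < int p" "0 < x" "x < int p"
  hence "\<not> int p dvd l" "\<not> int p dvd x" using nz_ndvd by auto
  hence "\<not> int p dvd l * x" using pdvd_mult by blast
  moreover have "0 \<le> (l * x) mod int p" using mod_in by simp
  ultimately show ?thesis by (metis dvd_eq_mod_eq_0 order_le_less)
qed

lemma scal_inj: assumes "0 < l" "l < int p" "0 \<le> x" "x < int p" "0 \<le> x'" "x' < int p"
  and "(l * x) mod int p = (l * x') mod int p" shows "x = x'"
proof -
  have "int p dvd l * (x - x')" using assms(7) by (simp add: mod_eq_dvd_iff algebra_simps)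
  moreover have "\<not> int p dvd l" using assms nz_ndvd by auto
  ultimately have "int p dvd x - x'" using pdvd_mult by blast
  thus ?thesis using assms range_eq by blast
qed

lemma card_Ico: "card {1..<int p} = p - 1"
  using p_gt by simp

lemma cl_zero_split:
  assumes pf: "perm_fin g (VV p)" and g0: "g (0,0) = (0,0)"
    and m: "\<And>v. v \<in> VV p \<Longrightarrow> v \<noteq> (0,0) \<Longrightarrow> card (cycle_of g v) = m"
  shows "cycle_lengths g (VV p) = replicate_mset ((p^2 - 1) div m) m + {#1#} \<and> m dvd p^2 - 1"
proof -
  interpret perm_fin g "VV p" by fact
  have i0: "inv_set {(0,0)}" using g0 by (intro inv_setI) auto
  have i1: "inv_set (VV p - {(0,0)})" by (rule inv_set_compl[OF i0])
  have "(g ^^ n) (0,0) = (0,0)" for n by (induction n) (simp_all add: g0)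
  hence "cycle_of g (0,0) = {(0,0)}" unfolding cycle_of_def by auto
  hence c0: "cycle_lengths g {(0,0)} = {#1#}" unfolding cycle_lengths_def by simp
  have c1: "cycle_lengths g (VV p - {(0,0)}) = replicate_mset (card (VV p - {(0,0)}) div m) m
        \<and> m dvd card (VV p - {(0,0)})"
    by (rule cl_const[OF i1]) (use m in auto)
  have "card (VV p - {(0,0)}) = p^2 - 1" using card_VV by simp
  moreover have "VV p = (VV p - {(0,0)}) \<union> {(0,0)}" by auto
  ultimately show ?thesis using cl_union[OF i1 i0] c0 c1 by auto
qed

lemma Dm_cl:
  assumes l: "0 < l" "l < int p" and m: "0 < m" "m < int p"
  defines "d1 \<equiv> ord p (nat l)" and "d2 \<equiv> ord p (nat m)"
  shows "perm_fin (Dm p l m) (VV p)"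
    "cycle_lengths (Dm p l m) (VV p) = replicate_mset ((p - 1)^2 div lcm d1 d2) (lcm d1 d2)
       + replicate_mset ((p - 1) div d1) d1 + replicate_mset ((p - 1) div d2) d2 + {#1#}"
proof -
  show pf: "perm_fin (Dm p l m) (VV p)"
  proof
    show "finite (VV p)" by simp
    show "bij_betw (Dm p l m) (VV p) (VV p)"
    proof (rule endo_bij)
      show "inj_on (Dm p l m) (VV p)"
      proof
        fix z z' assume z: "z \<in> VV p" "z' \<in> VV p" "Dm p l m z = Dm p l m z'"
        obtain x y x' y' where xy: "z = (x,y)" "z' = (x',y')" by (cases z, cases z')
        have r: "0 \<le> x" "x < int p" "0 \<le> y" "y < int p" "0 \<le> x'" "x' < int p" "0 \<le> y'" "y' < int p"
          using z xy by (auto simp: VV_def)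
        have e: "(l * x) mod int p = (l * x') mod int p" "(m * y) mod int p = (m * y') mod int p"
          using z(3) xy by (simp_all add: Dm_def)
        have "x = x'" by (rule scal_inj[OF l r(1,2,5,6) e(1)])
        moreover have "y = y'" by (rule scal_inj[OF m r(3,4,7,8) e(2)])
        ultimately show "z = z'" using xy by simp
      qed
      show "Dm p l m u \<in> VV p" if "u \<in> VV p" for u by (simp add: Dm_def VV_def mod_in)
    qed
  qed
  interpret perm_fin "Dm p l m" "VV p" by fact
  define S0 where "S0 = {(0::int,0::int)}"
  define S1 where "S1 = {1..<int p} \<times> {0::int}"
  define S2 where "S2 = {0::int} \<times> {1..<int p}"
  define S3 where "S3 = {1..<int p} \<times> {1..<int p}"
  have DS1: "Dm p l m z \<in> S1" if "z \<in> S1" for z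
  proof -
    from that obtain x where x: "z = (x, 0)" "0 < x" "x < int p" by (auto simp: S1_def)
    have "0 < (l * x) mod int p" using scal_nz[OF l x(2,3)] .
    thus ?thesis using x mod_in by (auto simp: S1_def Dm_def)
  qed
  have DS2: "Dm p l m z \<in> S2" if "z \<in> S2" for z
  proof -
    from that obtain y where x: "z = (0, y)" "0 < y" "y < int p" by (auto simp: S2_def)
    have "0 < (m * y) mod int p" using scal_nz[OF m x(2,3)] .
    thus ?thesis using x mod_in by (auto simp: S2_def Dm_def)
  qed
  have DS3: "Dm p l m z \<in> S3" if "z \<in> S3" for z
  proof -
    from that obtain x y where x: "z = (x, y)" "0 < x" "x < int p" "0 < y" "y < int p"
      by (auto simp: S3_def)
    have "0 < (l * x) mod int p" using scal_nz[OF l x(2,3)] .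
    moreover have "0 < (m * y) mod int p" using scal_nz[OF m x(4,5)] .
    ultimately show ?thesis using x mod_in by (auto simp: S3_def Dm_def)
  qed
  have sub: "S0 \<subseteq> VV p" "S1 \<subseteq> VV p" "S2 \<subseteq> VV p" "S3 \<subseteq> VV p"
    using p_gt by (auto simp: S0_def S1_def S2_def S3_def VV_def)
  have i0: "inv_set S0" using sub by (intro inv_setI) (auto simp: S0_def Dm_def)
  have i1: "inv_set S1" using sub DS1 by (intro inv_setI) auto
  have i2: "inv_set S2" using sub DS2 by (intro inv_setI) auto
  have i3: "inv_set S3" using sub DS3 by (intro inv_setI) auto
  have fixl: "((l ^ k * x) mod int p = x) \<longleftrightarrow> d1 dvd k" if "0 < x" "x < int p" for x k
    using scal_fix[of x "l ^ k"] that ordp[OF l] d1_def by auto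
  have fixm: "((m ^ k * x) mod int p = x) \<longleftrightarrow> d2 dvd k" if "0 < x" "x < int p" for x k
    using scal_fix[of x "m ^ k"] that ordp[OF m] d2_def by auto
  have c0: "cycle_lengths (Dm p l m) S0 = replicate_mset (card S0 div 1) 1 \<and> 1 dvd card S0"
    using i0 by (rule cl_const) (auto simp: S0_def intro!: card_cycle_dvd simp: Dm_pow)
  have c1: "cycle_lengths (Dm p l m) S1 = replicate_mset (card S1 div d1) d1 \<and> d1 dvd card S1"
    using i1
  proof (rule cl_const)
    fix z assume z: "z \<in> S1"
    then obtain x where x: "z = (x, 0)" "0 < x" "x < int p" by (auto simp: S1_def)
    show "card (cycle_of (Dm p l m) z) = d1"
      using z sub x by (intro card_cycle_dvd) (auto simp: Dm_pow fixl)
  qed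
  have c2: "cycle_lengths (Dm p l m) S2 = replicate_mset (card S2 div d2) d2 \<and> d2 dvd card S2"
    using i2
  proof (rule cl_const)
    fix z assume z: "z \<in> S2"
    then obtain x where x: "z = (0, x)" "0 < x" "x < int p" by (auto simp: S2_def)
    show "card (cycle_of (Dm p l m) z) = d2"
      using z sub x by (intro card_cycle_dvd) (auto simp: Dm_pow fixm)
  qed
  have c3: "cycle_lengths (Dm p l m) S3 = replicate_mset (card S3 div lcm d1 d2) (lcm d1 d2)
      \<and> lcm d1 d2 dvd card S3"
    using i3
  proof (rule cl_const)
    fix z assume z: "z \<in> S3"
    then obtain x y where x: "z = (x, y)" "0 < x" "x < int p" "0 < y" "y < int p" by (auto simp: S3_def)
    show "card (cycle_of (Dm p l m) z) = lcm d1 d2"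
      using z sub x by (intro card_cycle_dvd) (auto simp: Dm_pow fixl fixm)
  qed
  have cards: "card S0 = 1" "card S1 = p - 1" "card S2 = p - 1" "card S3 = (p - 1)^2"
    unfolding S0_def S1_def S2_def S3_def card_cartesian_product card_Ico
    using p_gt by (simp_all add: power2_eq_square)
  have U: "VV p = ((S3 \<union> S1) \<union> S2) \<union> S0"
    using p_gt by (auto simp: S0_def S1_def S2_def S3_def VV_def)
  have "cycle_lengths (Dm p l m) (VV p) =
     cycle_lengths (Dm p l m) S3 + cycle_lengths (Dm p l m) S1 + cycle_lengths (Dm p l m) S2
     + cycle_lengths (Dm p l m) S0"
    unfolding U
    by (subst cl_union, (intro inv_set_Un i0 i1 i2 i3)+, (auto simp: S0_def S1_def S2_def S3_def)[1])+
      (simp add: S0_def S1_def S2_def S3_def)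
  thus "cycle_lengths (Dm p l m) (VV p) = replicate_mset ((p - 1)^2 div lcm d1 d2) (lcm d1 d2)
       + replicate_mset ((p - 1) div d1) d1 + replicate_mset ((p - 1) div d2) d2 + {#1#}"
    using c0 c1 c2 c3 cards by simp
qed

lemma Jm_cl:
  assumes l: "0 < l" "l < int p"
  defines "d \<equiv> ord p (nat l)"
  shows "perm_fin (Jm p l) (VV p)"
    "cycle_lengths (Jm p l) (VV p) = replicate_mset ((p - 1) div d) (p * d)
       + replicate_mset ((p - 1) div d) d + {#1#}"
proof -
  show pf: "perm_fin (Jm p l) (VV p)"
  proof
    show "finite (VV p)" by simp
    show "bij_betw (Jm p l) (VV p) (VV p)"
    proof (rule endo_bij)
      show "inj_on (Jm p l) (VV p)"
      proof
        fix z z' assume z: "z \<in> VV p" "z' \<in> VV p" "Jm p l z = Jm p l z'"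
        obtain x y x' y' where xy: "z = (x,y)" "z' = (x',y')" by (cases z, cases z')
        have r: "0 \<le> x" "x < int p" "0 \<le> y" "y < int p" "0 \<le> x'" "x' < int p" "0 \<le> y'" "y' < int p"
          using z xy by (auto simp: VV_def)
        have ey: "(l * y) mod int p = (l * y') mod int p" using z(3) xy by (simp add: Jm_def)
        have "y = y'" by (rule scal_inj[OF l r(3,4,7,8) ey])
        hence "(l * x) mod int p = (l * x') mod int p" using z(3) xy
          by (auto simp: Jm_def mod_eq_dvd_iff algebra_simps)
        hence "x = x'" using scal_inj[OF l] r by blast
        thus "z = z'" using xy \<open>y = y'\<close> by simp
      qed
      show "Jm p l u \<in> VV p" if "u \<in> VV p" for u by (simp add: Jm_def VV_def mod_in)
    qed
  qed
  interpret perm_fin "Jm p l" "VV p" by fact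
  define S0 where "S0 = {(0::int,0::int)}"
  define S1 where "S1 = {1..<int p} \<times> {0::int}"
  define S2 where "S2 = {0..<int p} \<times> {1..<int p}"
  have DS1: "Jm p l z \<in> S1" if "z \<in> S1" for z
  proof -
    from that obtain x where x: "z = (x, 0)" "0 < x" "x < int p" by (auto simp: S1_def)
    have "0 < (l * x) mod int p" using scal_nz[OF l x(2,3)] .
    thus ?thesis using x mod_in by (auto simp: S1_def Jm_def)
  qed
  have DS2: "Jm p l z \<in> S2" if "z \<in> S2" for z
  proof -
    from that obtain x y where x: "z = (x, y)" "0 < y" "y < int p" by (auto simp: S2_def)
    have "0 < (l * y) mod int p" using scal_nz[OF l x(2,3)] .
    thus ?thesis using x mod_in by (auto simp: S2_def Jm_def)
  qed
  have sub: "S0 \<subseteq> VV p" "S1 \<subseteq> VV p" "S2 \<subseteq> VV p"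
    using p_gt by (auto simp: S0_def S1_def S2_def VV_def)
  have i0: "inv_set S0" using sub by (intro inv_setI) (auto simp: S0_def Jm_def)
  have i1: "inv_set S1" using sub DS1 by (intro inv_setI) auto
  have i2: "inv_set S2" using sub DS2 by (intro inv_setI) auto
  have fixl: "((l ^ k * x) mod int p = x) \<longleftrightarrow> d dvd k" if "0 < x" "x < int p" for x k
    using scal_fix[of x "l ^ k"] that ordp[OF l] d_def by auto
  have dpos: "0 < d" "d dvd p - 1" using ordp_props[OF l] d_def by auto
  have cop: "coprime p d"
  proof -
    have "0 < p - 1" using p_gt by simp
    hence "d \<le> p - 1" using dvd_imp_le[OF dpos(2)] by blast
    hence "d < p" using p_gt by simp
    hence "\<not> p dvd d" using dpos by (auto dest: dvd_imp_le)
    thus ?thesis using prime prime_imp_coprime by blast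
  qed
  have c0: "cycle_lengths (Jm p l) S0 = replicate_mset (card S0 div 1) 1 \<and> 1 dvd card S0"
    using i0 by (rule cl_const) (auto simp: S0_def intro!: card_cycle_dvd simp: Jm_pow)
  have c1: "cycle_lengths (Jm p l) S1 = replicate_mset (card S1 div d) d \<and> d dvd card S1"
    using i1
  proof (rule cl_const)
    fix z assume z: "z \<in> S1"
    then obtain x where x: "z = (x, 0)" "0 < x" "x < int p" by (auto simp: S1_def)
    show "card (cycle_of (Jm p l) z) = d"
      using z sub x by (intro card_cycle_dvd) (auto simp: Jm_pow fixl)
  qed
  have c2: "cycle_lengths (Jm p l) S2 = replicate_mset (card S2 div (p * d)) (p * d) \<and> p * d dvd card S2"
    using i2
  proof (rule cl_const)
    fix z assume z: "z \<in> S2"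
    then obtain x y where x: "z = (x, y)" "0 \<le> x" "x < int p" "0 < y" "y < int p" by (auto simp: S2_def)
    have "(Jm p l ^^ k) z = z \<longleftrightarrow> p * d dvd k" for k
    proof -
      have "(Jm p l ^^ k) z = z \<longleftrightarrow>
          (l ^ k * x + int k * l ^ (k - 1) * y) mod int p = x \<and> (l ^ k * y) mod int p = y"
        using Jm_pow[where z=z and l=l and k=k] z sub x by auto
      also have "\<dots> \<longleftrightarrow> int p dvd int k * l ^ (k - 1) * y \<and> d dvd k"
      proof -
        have "(l ^ k * y) mod int p = y \<longleftrightarrow> d dvd k" using fixl x by simp
        moreover have "d dvd k \<Longrightarrow> (l ^ k * x + int k * l ^ (k - 1) * y) mod int p = x
            \<longleftrightarrow> int p dvd int k * l ^ (k - 1) * y"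
        proof -
          assume "d dvd k"
          hence dl: "int p dvd l ^ k - 1" using ordp[OF l] d_def by simp
          have "(l ^ k * x + int k * l ^ (k - 1) * y) mod int p = x
             \<longleftrightarrow> int p dvd (l ^ k - 1) * x + int k * l ^ (k - 1) * y"
          proof -
            have "x mod int p = x" using x by simp
            hence "(l ^ k * x + int k * l ^ (k - 1) * y) mod int p = x
               \<longleftrightarrow> (l ^ k * x + int k * l ^ (k - 1) * y) mod int p = x mod int p" by simp
            also have "\<dots> \<longleftrightarrow> int p dvd (l ^ k * x + int k * l ^ (k - 1) * y) - x"
              by (rule mod_eq_dvd_iff)
            also have "(l ^ k * x + int k * l ^ (k - 1) * y) - x = (l ^ k - 1) * x + int k * l ^ (k - 1) * y"
              by (simp add: algebra_simps)
            finally show ?thesis .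
          qed
          also have "\<dots> \<longleftrightarrow> int p dvd int k * l ^ (k - 1) * y"
            using dl by (metis dvd_add_right_iff dvd_mult2)
          finally show ?thesis .
        qed
        ultimately show ?thesis by blast
      qed
      also have "\<dots> \<longleftrightarrow> p dvd k \<and> d dvd k"
      proof -
        have "\<not> int p dvd l ^ (k - 1)" using pow_nz[OF nz_ndvd[OF l]] .
        moreover have "\<not> int p dvd y" using nz_ndvd[OF x(4,5)] .
        ultimately have "int p dvd int k * l ^ (k - 1) * y \<longleftrightarrow> int p dvd int k"
          using pdvd_mult by blast
        thus ?thesis by simp
      qed
      also have "\<dots> \<longleftrightarrow> p * d dvd k"
        using cop divides_mult dvd_mult_left dvd_mult_right by metis
      finally show ?thesis .
    qed
    thus "card (cycle_of (Jm p l) z) = p * d"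
      using z sub by (intro card_cycle_dvd) auto
  qed
  have cards: "card S0 = 1" "card S1 = p - 1" "card S2 = p * (p - 1)"
    using p_gt by (simp_all add: S0_def S1_def S2_def card_cartesian_product card_Ico)
  have U: "VV p = (S2 \<union> S1) \<union> S0"
    using p_gt by (auto simp: S0_def S1_def S2_def VV_def)
  have "cycle_lengths (Jm p l) (VV p) =
     cycle_lengths (Jm p l) S2 + cycle_lengths (Jm p l) S1 + cycle_lengths (Jm p l) S0"
    unfolding U
    by (subst cl_union, (intro inv_set_Un i0 i1 i2)+, (auto simp: S0_def S1_def S2_def)[1])+
      (simp add: S0_def S1_def S2_def)
  moreover have "p * (p - 1) div (p * d) = (p - 1) div d" using p_gt by simp
  ultimately show "cycle_lengths (Jm p l) (VV p) = replicate_mset ((p - 1) div d) (p * d)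
       + replicate_mset ((p - 1) div d) d + {#1#}"
    using c0 c1 c2 cards by simp
qed

end



definition good :: "nat \<Rightarrow> nat multiset \<Rightarrow> bool" where
  "good p M \<longleftrightarrow>
         (\<exists>d. 0 < d \<and> d dvd p ^ 2 - 1 \<and>
               M = replicate_mset ((p ^ 2 - 1) div d) d + {#1#})
         \<or> (\<exists>d. 0 < d \<and> d dvd p - 1 \<and>
               M = replicate_mset ((p - 1) div d) (p * d)
                                 + replicate_mset ((p - 1) div d) d + {#1#})
         \<or> (\<exists>d1 d2. 0 < d1 \<and> 0 < d2 \<and> d1 dvd p - 1 \<and> d2 dvd p - 1 \<and>
               M = replicate_mset ((p - 1) ^ 2 div lcm d1 d2) (lcm d1 d2)
                                 + replicate_mset ((p - 1) div d1) d1
                                 + replicate_mset ((p - 1) div d2) d2 + {#1#})"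

context fp begin

lemma noeig_cl:
  assumes g: "linmap p g" and b: "bij_betw g (VV p) (VV p)"
    and ne: "\<And>v c. v \<in> VV p \<Longrightarrow> v \<noteq> (0,0) \<Longrightarrow> g v \<noteq> smul p c v"
  shows "good p (cycle_lengths g (VV p))"
proof -
  have pf: "perm_fin g (VV p)" using b by unfold_locales auto
  interpret perm_fin g "VV p" by fact
  have allfix: "(g ^^ k) v = v \<longleftrightarrow> (\<forall>u\<in>VV p. (g ^^ k) u = u)"
    if v: "v \<in> VV p" "v \<noteq> (0,0)" for v k
  proof
    assume fx: "(g ^^ k) v = v"
    have w: "g v \<in> VV p" using lin_in[OF g v(1)] .
    have "\<not> int p dvd det v (g v)"
      by (rule indep_det[OF v w]) (use ne v in metis)
    hence bP: "bij_betw (Phi p v (g v)) (VV p) (VV p)" using Phi_bij v w by blast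
    show "\<forall>u\<in>VV p. (g ^^ k) u = u"
    proof
      fix u assume u: "u \<in> VV p"
      have "u \<in> Phi p v (g v) ` VV p" using bP u unfolding bij_betw_def by simp
      then obtain z where z: "z \<in> VV p" "u = Phi p v (g v) z" by blast
      have "(g ^^ k) u = Phi p ((g ^^ k) v) ((g ^^ k) (g v)) z"
        using lin_Phi[OF lin_funpow[OF g] v(1) w] z by simp
      also have "(g ^^ k) (g v) = g v" using fx by (metis funpow_swap1)
      finally show "(g ^^ k) u = u" using fx z by simp
    qed
  qed (use v in auto)
  define v0 where "v0 = ((1::int), (0::int))"
  have v0: "v0 \<in> VV p" "v0 \<noteq> (0,0)" using p_gt by (auto simp: v0_def VV_def)
  define m where "m = per g v0"
  have cm: "card (cycle_of g v) = m" if "v \<in> VV p" "v \<noteq> (0,0)" for v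
  proof (rule card_cycle_dvd[OF that(1)])
    fix k show "(g ^^ k) v = v \<longleftrightarrow> m dvd k"
      using allfix[OF that] allfix[OF v0] fix_iff[OF v0(1)] m_def by simp
  qed
  have mpos: "0 < m" using per(1)[OF v0(1)] m_def by simp
  have "cycle_lengths g (VV p) = replicate_mset ((p^2 - 1) div m) m + {#1#} \<and> m dvd p^2 - 1"
    by (rule cl_zero_split[OF pf lin_zero[OF g] cm])
  thus ?thesis unfolding good_def using mpos by blast
qed

lemma mmd: "(x * (a mod m) - y * (b mod m)) mod m = (x * a - y * b) mod (m::int)"
proof -
  have "(x * (a mod m) - y * (b mod m)) mod m = ((x * (a mod m)) mod m - (y * (b mod m)) mod m) mod m"
    by (simp add: mod_diff_eq)
  also have "\<dots> = ((x * a) mod m - (y * b) mod m) mod m" by (simp add: mod_mult_right_eq)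
  also have "\<dots> = (x * a - y * b) mod m" by (simp add: mod_diff_eq)
  finally show ?thesis .
qed

lemma mA: "(a + (b + c mod m)) mod m = (a + (b + c)) mod (m::int)"
proof -
  have "(a + (b + c mod m)) mod m = ((a + b) + c mod m) mod m" by (simp only: add.assoc)
  also have "\<dots> = ((a + b) + c) mod m" by (rule mod_add_right_eq)
  also have "\<dots> = (a + (b + c)) mod m" by (simp only: add.assoc)
  finally show ?thesis .
qed

lemma mA': "(a + (b mod m + c)) mod m = (a + (b + c)) mod (m::int)"
proof -
  have "(a + (b mod m + c)) mod m = (b mod m + (a + c)) mod m" by (simp only: add.left_commute)
  also have "\<dots> = (b + (a + c)) mod m" by (rule mod_add_left_eq)
  also have "\<dots> = (a + (b + c)) mod m" by (simp only: add.left_commute)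
  finally show ?thesis .
qed

lemma det_shear: "int p dvd det v (vadd p w (smul p c v)) \<longleftrightarrow> int p dvd det v w"
proof -
  have w': "vadd p w (smul p c v) = ((fst w + c * fst v) mod int p, (snd w + c * snd v) mod int p)"
    by (simp add: vadd_def smul_def mod_add_right_eq)
  have "det v (vadd p w (smul p c v)) mod int p
      = (fst v * (snd w + c * snd v) - snd v * (fst w + c * fst v)) mod int p"
    unfolding w' det_def by (simp add: mmd)
  also have "\<dots> = det v w mod int p" by (simp add: det_def algebra_simps)
  finally have "det v (vadd p w (smul p c v)) mod int p = det v w mod int p" .
  thus ?thesis by (metis dvd_eq_mod_eq_0)
qed

lemma det_scale: "int p dvd det (smul p c v) w \<longleftrightarrow> int p dvd c * det v w"
proof -
  have "det (smul p c v) w mod int p = (snd w * ((c * fst v) mod int p) - fst w * ((c * snd v) mod int p)) mod int p"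
    by (simp add: det_def smul_def mult.commute)
  also have "\<dots> = (snd w * (c * fst v) - fst w * (c * snd v)) mod int p" by (rule mmd)
  also have "\<dots> = (c * det v w) mod int p" by (simp add: det_def algebra_simps)
  finally have "det (smul p c v) w mod int p = (c * det v w) mod int p" .
  thus ?thesis by (metis dvd_eq_mod_eq_0)
qed

lemma conj_good:
  assumes g: "linmap p g" and b: "bij_betw g (VV p) (VV p)"
    and v: "v \<in> VV p" and w: "w \<in> VV p" and dt: "\<not> int p dvd det v w"
    and c: "\<And>z. z \<in> VV p \<Longrightarrow> g (Phi p v w z) = Phi p v w (D z)"
    and pf: "perm_fin D (VV p)"
  shows "cycle_lengths g (VV p) = cycle_lengths D (VV p)"
  by (rule cl_conj[OF pf Phi_bij[OF v w dt]]) (use c in auto)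

lemma eig_cl:
  assumes g: "linmap p g" and b: "bij_betw g (VV p) (VV p)"
    and v: "v \<in> VV p" "v \<noteq> (0,0)" and gv: "g v = smul p c v"
  shows "good p (cycle_lengths g (VV p))"
proof -
  define l where "l = c mod int p"
  have gv': "g v = smul p l v" using gv smul_mod l_def by simp
  have inj: "inj_on g (VV p)" using b bij_betw_def by blast
  have l: "0 < l" "l < int p"
  proof -
    have "l \<noteq> 0"
    proof
      assume "l = 0"
      hence "g v = g (0,0)" using gv' lin_zero[OF g] by (simp add: smul_0)
      thus False using inj v unfolding inj_on_def by auto
    qed
    thus "0 < l" "l < int p" using mod_in l_def by (auto simp: order_le_less)
  qed
  obtain v1 v2 where vv: "v = (v1, v2)" by (cases v)
  define w where "w = (if v1 = 0 then ((1::int), (0::int)) else (0, 1))"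
  have w: "w \<in> VV p" using p_gt by (auto simp: w_def VV_def)
  have dt: "\<not> int p dvd det v w"
  proof (cases "v1 = 0")
    case True
    hence "v2 \<noteq> 0" "0 \<le> v2" "v2 < int p" using v vv by (auto simp: VV_def)
    thus ?thesis using True range_zero by (auto simp: w_def det_def vv)
  next
    case False
    hence "0 \<le> v1" "v1 < int p" using v vv by (auto simp: VV_def)
    thus ?thesis using False range_zero by (auto simp: w_def det_def vv)
  qed
  have bP: "bij_betw (Phi p v w) (VV p) (VV p)" using Phi_bij[OF v(1) w dt] .
  obtain z where z: "z \<in> VV p" "g w = Phi p v w z"
    using bP lin_in[OF g w] unfolding bij_betw_def by (metis imageE)
  obtain \<alpha> \<mu> where am: "z = (\<alpha>, \<mu>)" by (cases z)
  have gw: "g w = vadd p (smul p \<alpha> v) (smul p \<mu> w)" using z am by (simp add: Phi_def)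
  have amr: "0 \<le> \<alpha>" "\<alpha> < int p" "0 \<le> \<mu>" "\<mu> < int p" using z am by (auto simp: VV_def)
  have diag: "good p (cycle_lengths g (VV p))"
    if v': "v' \<in> VV p" and w': "w' \<in> VV p" and dt': "\<not> int p dvd det v' w'"
      and gv'': "g v' = smul p l v'" and gw'': "g w' = smul p \<mu> w'" for v' w'
  proof -
    have cj: "\<And>z. z \<in> VV p \<Longrightarrow> g (Phi p v' w' z) = Phi p v' w' (Dm p l \<mu> z)"
      using conjD[OF g v' w' gv'' gw''] by blast
    have "\<mu> \<noteq> 0"
    proof
      assume "\<mu> = 0"
      hence "Dm p l \<mu> (0,1) = Dm p l \<mu> (0,0)" by (simp add: Dm_def)
      moreover have "inj_on (Dm p l \<mu>) (VV p)"
        by (rule conj_inj[OF inj Phi_inj[OF v' w' dt']], simp, simp add: Dm_def VV_def mod_in, rule cj)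
      moreover have "((0::int), (1::int)) \<in> VV p" using p_gt by (simp add: VV_def)
      ultimately have "((0::int), (1::int)) = (0, 0)" using zero_in by (metis inj_onD)
      thus False by simp
    qed
    hence mu: "0 < \<mu>" "\<mu> < int p" using amr by auto
    have "cycle_lengths g (VV p) = cycle_lengths (Dm p l \<mu>) (VV p)"
      by (rule conj_good[OF g b v' w' dt' cj Dm_cl(1)[OF l mu]])
    also have "\<dots> = replicate_mset ((p - 1)^2 div lcm (ord p (nat l)) (ord p (nat \<mu>)))
          (lcm (ord p (nat l)) (ord p (nat \<mu>)))
       + replicate_mset ((p - 1) div ord p (nat l)) (ord p (nat l))
       + replicate_mset ((p - 1) div ord p (nat \<mu>)) (ord p (nat \<mu>)) + {#1#}"
      by (rule Dm_cl(2)[OF l mu])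
    finally show ?thesis unfolding good_def using ordp_props[OF l] ordp_props[OF mu] by blast
  qed
  show ?thesis
  proof (cases "\<mu> = l")
    case False
    have "\<not> int p dvd \<mu> - l"
    proof
      assume "int p dvd \<mu> - l"
      hence "\<mu> = l" using amr l range_eq by auto
      thus False using False by simp
    qed
    then obtain i where i: "((\<mu> - l) * i) mod int p = 1" using inverse_ex by blast
    define cc where "cc = \<alpha> * i"
    have key: "int p dvd \<alpha> + cc * l - \<mu> * cc"
    proof -
      have "(\<alpha> + cc * l - \<mu> * cc) = \<alpha> - \<alpha> * ((\<mu> - l) * i)" by (simp add: cc_def algebra_simps)
      moreover have "(\<alpha> * ((\<mu> - l) * i)) mod int p = \<alpha> mod int p"
        using i by (metis mod_mult_right_eq mult.right_neutral)
      ultimately show ?thesis by (metis mod_eq_dvd_iff dvd_minus_iff minus_diff_eq)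
    qed
    define w' where "w' = vadd p w (smul p cc v)"
    have w': "w' \<in> VV p" by (simp add: w'_def)
    have dt': "\<not> int p dvd det v w'" using dt det_shear w'_def by simp
    have gw': "g w' = smul p \<mu> w'"
    proof -
      have "g w' = vadd p (g w) (smul p cc (g v))"
        unfolding w'_def using lin_add[OF g w smul_in] lin_smul[OF g v(1)] by simp
      also have "\<dots> = vadd p (vadd p (smul p \<alpha> v) (smul p \<mu> w)) (smul p (cc * l) v)"
        using gw gv' smul_smul by simp
      also have "\<dots> = smul p \<mu> w'"
      proof -
        have e: "((\<alpha> + cc * l) * x + \<mu> * y) mod int p = (\<mu> * (y + cc * x)) mod int p" for x y
        proof -
          have "((\<alpha> + cc * l) * x + \<mu> * y) - (\<mu> * (y + cc * x)) = (\<alpha> + cc * l - \<mu> * cc) * x"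
            by (simp add: algebra_simps)
          thus ?thesis using key by (metis mod_eq_dvd_iff dvd_mult2)
        qed
        show ?thesis unfolding w'_def
          using e[of v1 "fst w"] e[of v2 "snd w"]
          by (simp add: vadd_def smul_def vv mod_simps algebra_simps mA mA')
      qed
      finally show ?thesis .
    qed
    show ?thesis by (rule diag[OF v(1) w' dt' gv' gw'])
  next
    case True
    show ?thesis
    proof (cases "\<alpha> = 0")
      case True
      have "g w = smul p \<mu> w" using gw True vadd_0[OF smul_in] smul_0 by simp
      thus ?thesis using diag[OF v(1) w dt gv'] by blast
    next
      case False
      define v' where "v' = smul p \<alpha> v"
      have v': "v' \<in> VV p" by (simp add: v'_def)
      have "\<not> int p dvd \<alpha>" using False amr range_zero by auto
      hence dt': "\<not> int p dvd det v' w" using dt det_scale pdvd_mult v'_def by simp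
      have gv'': "g v' = smul p l v'"
        using lin_smul[OF g v(1)] gv' smul_smul v'_def by (simp add: mult.commute)
      have gw': "g w = vadd p v' (smul p l w)" using gw True v'_def by simp
      have cj: "\<And>z. z \<in> VV p \<Longrightarrow> g (Phi p v' w z) = Phi p v' w (Jm p l z)"
        using conjJ[OF g v' w gv'' gw'] by blast
      have "cycle_lengths g (VV p) = cycle_lengths (Jm p l) (VV p)"
        by (rule conj_good[OF g b v' w dt' cj Jm_cl(1)[OF l]])
      also have "\<dots> = replicate_mset ((p - 1) div ord p (nat l)) (p * ord p (nat l))
       + replicate_mset ((p - 1) div ord p (nat l)) (ord p (nat l)) + {#1#}"
        by (rule Jm_cl(2)[OF l])
      finally show ?thesis unfolding good_def using ordp_props[OF l] by blast
    qed
  qed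
qed

theorem classify:
  assumes g: "linmap p g" and b: "bij_betw g (VV p) (VV p)"
  shows "good p (cycle_lengths g (VV p))"
proof (cases "\<exists>v c. v \<in> VV p \<and> v \<noteq> (0,0) \<and> g v = smul p c v")
  case True
  then obtain v c where "v \<in> VV p" "v \<noteq> (0,0)" "g v = smul p c v" by blast
  thus ?thesis using eig_cl[OF g b] by blast
next
  case False thus ?thesis using noeig_cl[OF g b] by blast
qed

end



definition kmul :: "nat \<Rightarrow> int \<Rightarrow> int \<Rightarrow> int \<times> int \<Rightarrow> int \<times> int \<Rightarrow> int \<times> int" where
  "kmul p s t u w = ((fst u * fst w + s * snd u * snd w) mod int p,
                     (fst u * snd w + snd u * fst w + t * snd u * snd w) mod int p)"

definition Kr :: "nat \<Rightarrow> int \<Rightarrow> int \<Rightarrow> (int \<times> int) ring" where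
  "Kr p s t = \<lparr>carrier = VV p, monoid.mult = kmul p s t, one = (1, 0), zero = (0, 0), add = vadd p\<rparr>"

lemma s1: "((a mod m) * x + s * (b mod m) * y) mod m = (a * x + s * b * y) mod (m::int)"
proof -
  have "[(a mod m) * x + s * (b mod m) * y = a * x + s * b * y] (mod m)"
    by (intro cong_add cong_mult cong_refl) (simp_all add: cong_def)
  thus ?thesis by (simp add: cong_def)
qed

lemma s3: "((a mod m) * x + (b mod m) * y + t * (b mod m) * z) mod m = (a * x + b * y + t * b * z) mod (m::int)"
proof -
  have "[(a mod m) * x + (b mod m) * y + t * (b mod m) * z = a * x + b * y + t * b * z] (mod m)"
    by (intro cong_add cong_mult cong_refl) (simp_all add: cong_def)
  thus ?thesis by (simp add: cong_def)
qed

lemma s2: "(x * (a mod m) + y * (b mod m)) mod m = (x * a + y * b) mod (m::int)"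
proof -
  have "[x * (a mod m) + y * (b mod m) = x * a + y * b] (mod m)"
    by (intro cong_add cong_mult cong_refl) (simp_all add: cong_def)
  thus ?thesis by (simp add: cong_def)
qed

lemma s4: "(x * (a mod m) + y * (b mod m) + z * (a mod m)) mod m = (x * a + y * b + z * a) mod (m::int)"
proof -
  have "[x * (a mod m) + y * (b mod m) + z * (a mod m) = x * a + y * b + z * a] (mod m)"
    by (intro cong_add cong_mult cong_refl) (simp_all add: cong_def)
  thus ?thesis by (simp add: cong_def)
qed

context fp begin

lemma kmul_in: "kmul p s t u w \<in> VV p" by (simp add: kmul_def VV_def mod_in)

lemma kmul_assoc: "kmul p s t (kmul p s t u w) z = kmul p s t u (kmul p s t w z)"
proof -
  have "kmul p s t (kmul p s t u w) z =
     (((fst u * fst w + s * snd u * snd w) * fst z + s * (fst u * snd w + snd u * fst w + t * snd u * snd w) * snd z) mod int p,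
      ((fst u * fst w + s * snd u * snd w) * snd z + (fst u * snd w + snd u * fst w + t * snd u * snd w) * fst z
        + t * (fst u * snd w + snd u * fst w + t * snd u * snd w) * snd z) mod int p)"
    unfolding kmul_def fst_conv snd_conv s1 s3 ..
  also have "\<dots> =
     ((fst u * (fst w * fst z + s * snd w * snd z) + s * snd u * (fst w * snd z + snd w * fst z + t * snd w * snd z)) mod int p,
      (fst u * (fst w * snd z + snd w * fst z + t * snd w * snd z) + snd u * (fst w * fst z + s * snd w * snd z)
        + t * snd u * (fst w * snd z + snd w * fst z + t * snd w * snd z)) mod int p)"
    by (simp add: algebra_simps)
  also have "\<dots> = kmul p s t u (kmul p s t w z)"
    unfolding kmul_def fst_conv snd_conv s2 s4 ..
  finally show ?thesis .
qed

lemma kmul_comm: "kmul p s t u w = kmul p s t w u"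
  by (simp add: kmul_def algebra_simps)

lemma kmul_one: "u \<in> VV p \<Longrightarrow> kmul p s t (1, 0) u = u"
  using VV_mod[of u] by (simp add: kmul_def prod_eq_iff)

lemma kmul_distr: "kmul p s t (vadd p u w) z = vadd p (kmul p s t u z) (kmul p s t w z)"
proof -
  have "kmul p s t (vadd p u w) z =
     (((fst u + fst w) * fst z + s * (snd u + snd w) * snd z) mod int p,
      ((fst u + fst w) * snd z + (snd u + snd w) * fst z + t * (snd u + snd w) * snd z) mod int p)"
    unfolding kmul_def vadd_def fst_conv snd_conv s1 s3 ..
  also have "\<dots> = vadd p (kmul p s t u z) (kmul p s t w z)"
    by (simp add: kmul_def vadd_def mod_add_eq algebra_simps)
  finally show ?thesis .
qed

lemma vadd_assoc: "vadd p (vadd p u w) z = vadd p u (vadd p w z)"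
  by (simp add: vadd_def mod_simps add.assoc)

lemma vadd_comm: "vadd p u w = vadd p w u"
  by (simp add: vadd_def add.commute)

lemma vadd_inv: "u \<in> VV p \<Longrightarrow> \<exists>y\<in>VV p. vadd p y u = (0, 0)"
  by (rule bexI[of _ "((- fst u) mod int p, (- snd u) mod int p)"])
     (simp_all add: vadd_def mod_simps VV_def mod_in)

lemma Kr_cring: "cring (Kr p s t)"
proof (rule cringI)
  show "abelian_group (Kr p s t)"
  proof (rule abelian_groupI)
    show "\<And>x y. x \<in> carrier (Kr p s t) \<Longrightarrow> y \<in> carrier (Kr p s t) \<Longrightarrow>
       x \<oplus>\<^bsub>Kr p s t\<^esub> y = y \<oplus>\<^bsub>Kr p s t\<^esub> x"
      by (simp add: Kr_def vadd_comm)
  qed (auto simp: Kr_def vadd_assoc vadd_0 vadd_inv)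
  show "comm_monoid (Kr p s t)"
  proof (rule comm_monoidI)
    show "\<And>x y. x \<in> carrier (Kr p s t) \<Longrightarrow> y \<in> carrier (Kr p s t) \<Longrightarrow>
       x \<otimes>\<^bsub>Kr p s t\<^esub> y = y \<otimes>\<^bsub>Kr p s t\<^esub> x"
      by (simp add: Kr_def kmul_comm)
  qed (use p_gt in \<open>auto simp: Kr_def kmul_in kmul_assoc kmul_one mem_VV\<close>)
  show "\<And>x y z. x \<in> carrier (Kr p s t) \<Longrightarrow> y \<in> carrier (Kr p s t) \<Longrightarrow> z \<in> carrier (Kr p s t) \<Longrightarrow>
     (x \<oplus>\<^bsub>Kr p s t\<^esub> y) \<otimes>\<^bsub>Kr p s t\<^esub> z = x \<otimes>\<^bsub>Kr p s t\<^esub> z \<oplus>\<^bsub>Kr p s t\<^esub> y \<otimes>\<^bsub>Kr p s t\<^esub> z"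
    by (simp add: Kr_def kmul_distr)
qed

lemma norm_nz:
  assumes irr: "\<And>y. \<not> int p dvd y^2 - t * y - s"
    and a: "(a1, a2) \<in> VV p" "(a1, a2) \<noteq> (0, 0)"
  shows "\<not> int p dvd a1 * (a1 + t * a2) - s * a2 * a2"
proof
  assume N: "int p dvd a1 * (a1 + t * a2) - s * a2 * a2"
  have r: "0 \<le> a1" "a1 < int p" "0 \<le> a2" "a2 < int p" using a by (auto simp: VV_def)
  show False
  proof (cases "a2 = 0")
    case True
    hence "a1 \<noteq> 0" using a by simp
    hence "\<not> int p dvd a1" using r nz_ndvd by auto
    hence "\<not> int p dvd a1 * a1" using pdvd_mult by blast
    thus False using N True by simp
  next
    case False
    hence na2: "\<not> int p dvd a2" using r nz_ndvd by auto
    then obtain i where i: "(a2 * i) mod int p = 1" using inverse_ex by blast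
    define y where "y = - a1 * i"
    have "int p dvd a2 * i - 1" using i by (metis mod_eq_dvd_iff mod_mod_trivial p_gt(2) mod_pos_pos_trivial zero_le_one)
    hence q: "int p dvd a2 * y + a1"
    proof -
      assume "int p dvd a2 * i - 1"
      hence X: "int p dvd (- a1) * (a2 * i - 1)" by (rule dvd_mult)
      have E: "(- a1) * (a2 * i - 1) = a2 * y + a1" by (simp add: y_def algebra_simps)
      show ?thesis using X unfolding E .
    qed
    define q where "q = a2 * y + a1"
    have "a2 * a2 * (y^2 - t * y - s) = q * (q - 2 * a1 - t * a2) + (a1 * (a1 + t * a2) - s * a2 * a2)"
      by (simp add: q_def power2_eq_square algebra_simps)
    hence "int p dvd a2 * a2 * (y^2 - t * y - s)" using q N q_def by simp
    hence "int p dvd a2 * a2 \<or> int p dvd (y^2 - t * y - s)" using pdvd_mult by blast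
    thus False using irr na2 pdvd_mult by blast
  qed
qed

lemma Kr_integral:
  assumes irr: "\<And>y. \<not> int p dvd y^2 - t * y - s"
    and a: "a \<in> VV p" and z: "z \<in> VV p" and e: "kmul p s t a z = (0, 0)"
  shows "a = (0, 0) \<or> z = (0, 0)"
proof (rule ccontr)
  assume "\<not> (a = (0, 0) \<or> z = (0, 0))"
  hence an: "a \<noteq> (0,0)" and zn: "z \<noteq> (0,0)" by auto
  obtain a1 a2 where aa: "a = (a1, a2)" by (cases a)
  obtain z1 z2 where zz: "z = (z1, z2)" by (cases z)
  define N where "N = a1 * (a1 + t * a2) - s * a2 * a2"
  have nN: "\<not> int p dvd N" using norm_nz[OF irr] a an aa N_def by simp
  have E1: "int p dvd a1 * z1 + s * a2 * z2" and E2: "int p dvd a1 * z2 + a2 * z1 + t * a2 * z2"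
    using e aa zz by (auto simp: kmul_def dvd_eq_mod_eq_0)
  have "z1 * N = (a1 + t * a2) * (a1 * z1 + s * a2 * z2) - s * a2 * (a1 * z2 + a2 * z1 + t * a2 * z2)"
    by (simp add: N_def algebra_simps)
  hence "int p dvd z1 * N" using E1 E2 by simp
  hence "int p dvd z1" using nN pdvd_mult by blast
  hence z1: "z1 = 0" using z zz range_zero by (auto simp: VV_def)
  have "z2 * N = a1 * (a1 * z2 + a2 * z1 + t * a2 * z2) - a2 * (a1 * z1 + s * a2 * z2)"
    by (simp add: N_def algebra_simps)
  hence "int p dvd z2 * N" using E1 E2 by simp
  hence "int p dvd z2" using nN pdvd_mult by blast
  hence "z2 = 0" using z zz range_zero by (auto simp: VV_def)
  thus False using z1 zz zn by simp
qed

lemma Kr_field: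
  assumes irr: "\<And>y. \<not> int p dvd y^2 - t * y - s"
  shows "field (Kr p s t)"
proof -
  interpret cring "Kr p s t" by (rule Kr_cring)
  have dom: "domain (Kr p s t)"
  proof (rule domain.intro)
    show "cring (Kr p s t)" by (rule Kr_cring)
    show "domain_axioms (Kr p s t)"
      by (rule domain_axioms.intro) (auto simp: Kr_def dest: Kr_integral[OF irr])
  qed
  show ?thesis
  proof (rule field_intro2)
    show "\<zero>\<^bsub>Kr p s t\<^esub> \<noteq> \<one>\<^bsub>Kr p s t\<^esub>" by (simp add: Kr_def)
    fix x assume x: "x \<in> carrier (Kr p s t) - {\<zero>\<^bsub>Kr p s t\<^esub>}"
    have inj: "inj_on (\<lambda>z. x \<otimes>\<^bsub>Kr p s t\<^esub> z) (carrier (Kr p s t))"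
      using domain.m_lcancel[OF dom] x by (auto simp: inj_on_def)
    have "(\<lambda>z. x \<otimes>\<^bsub>Kr p s t\<^esub> z) ` carrier (Kr p s t) = carrier (Kr p s t)"
      using x by (intro endo_inj_surj[OF _ _ inj]) (auto simp: Kr_def kmul_in)
    moreover have "\<one>\<^bsub>Kr p s t\<^esub> \<in> carrier (Kr p s t)" by simp
    ultimately obtain y where y: "y \<in> carrier (Kr p s t)" "x \<otimes>\<^bsub>Kr p s t\<^esub> y = \<one>\<^bsub>Kr p s t\<^esub>"
      by (metis imageE)
    hence "y \<otimes>\<^bsub>Kr p s t\<^esub> x = \<one>\<^bsub>Kr p s t\<^esub>" using x m_comm by auto
    thus "x \<in> Units (Kr p s t)" using x y unfolding Units_def by auto
  qed
qed

end



lemma ma: "(a * (b mod m) + c mod m) mod m = (a * b + c) mod (m::int)"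
proof -
  have "(a * (b mod m) + c mod m) mod m = (a * (b mod m) + c) mod m" by (simp add: mod_add_right_eq)
  also have "\<dots> = ((a * (b mod m)) mod m + c) mod m" by (simp add: mod_add_left_eq)
  also have "\<dots> = ((a * b) mod m + c) mod m" by (simp add: mod_mult_right_eq)
  also have "\<dots> = (a * b + c) mod m" by (simp add: mod_add_left_eq)
  finally show ?thesis .
qed

context fp begin

lemma irr_ex: "\<exists>s t. \<forall>y. \<not> int p dvd y^2 - t * y - s"
proof (cases "p = 2")
  case True
  have "\<not> int p dvd y^2 - 1 * y - 1" for y :: int
  proof -
    have "even (y * (y - 1))" by simp
    hence "odd (y^2 - 1 * y - 1)" by (simp add: power2_eq_square algebra_simps)
    thus ?thesis using True by simp
  qed
  thus ?thesis by blast
next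
  case False
  have p3: "2 < p" using p_gt False by simp
  define S where "S = {0..<int p}"
  define q where "q y = (y * y) mod int p" for y
  have qS: "q ` S \<subseteq> S" using mod_in by (auto simp: q_def S_def)
  have "q 1 = q (int p - 1)"
  proof -
    have "(int p - 1) * (int p - 1) = 1 + int p * (int p - 2)" by (simp add: algebra_simps)
    hence "q (int p - 1) = (1 + int p * (int p - 2)) mod int p" by (simp add: q_def)
    also have "\<dots> = 1 mod int p" by simp
    finally show ?thesis by (simp add: q_def)
  qed
  moreover have "1 \<in> S" "int p - 1 \<in> S" "(1::int) \<noteq> int p - 1" using p3 by (auto simp: S_def)
  ultimately have ni: "\<not> inj_on q S" unfolding inj_on_def by blast
  have fS: "finite S" by (simp add: S_def)
  have "q ` S \<noteq> S"
  proof
    assume "q ` S = S"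
    hence "card (q ` S) = card S" by simp
    hence "inj_on q S" using eq_card_imp_inj_on[OF fS] by blast
    thus False using ni by simp
  qed
  then obtain s where s: "s \<in> S" "s \<notin> q ` S" using qS by blast
  have "\<not> int p dvd y^2 - 0 * y - s" for y
  proof
    assume "int p dvd y^2 - 0 * y - s"
    hence "(y * y) mod int p = s mod int p" by (simp add: mod_eq_dvd_iff power2_eq_square)
    hence "q (y mod int p) = s" using s(1) by (simp add: q_def S_def mod_simps)
    moreover have "y mod int p \<in> S" using mod_in by (simp add: S_def)
    ultimately show False using s(2) by blast
  qed
  thus ?thesis by blast
qed

lemma lin_Dm: "linmap p (Dm p l m)"
  unfolding linmap_def
  by (auto simp: Dm_def vadd_def VV_def mod_in mod_simps algebra_simps)

lemma lin_Jm: "linmap p (Jm p l)"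
proof -
  have "Jm p l (vadd p u w) = vadd p (Jm p l u) (Jm p l w)" for u w
  proof -
    have "Jm p l (vadd p u w) = ((l * (fst u + fst w) + (snd u + snd w)) mod int p,
                                 (l * (snd u + snd w)) mod int p)"
      by (simp add: Jm_def vadd_def ma mod_mult_right_eq)
    also have "\<dots> = vadd p (Jm p l u) (Jm p l w)"
      by (simp add: Jm_def vadd_def mod_add_eq algebra_simps)
    finally show ?thesis .
  qed
  thus ?thesis unfolding linmap_def by (auto simp: Jm_def VV_def mod_in)
qed

lemma scal_ord: assumes "0 < d" "d dvd p - 1"
  shows "\<exists>l::int. 0 < l \<and> l < int p \<and> ord p (nat l) = d"
proof -
  obtain x where x: "residue_primroot p x" using prime_primitive_root_exists[OF p_gt(1) prime] by blast
  hence ox: "ord p x = p - 1" and cx: "coprime p x"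
    using totient_prime[OF prime] by (auto simp: residue_primroot_def)
  define k where "k = (p - 1) div d"
  have kd: "k dvd p - 1" "k * d = p - 1" using assms by (auto simp: k_def)
  define a where "a = x ^ k mod p"
  have "ord p a = ord p (x ^ k)" by (simp add: a_def)
  also have "\<dots> = ord p x div gcd k (ord p x)" by (rule ord_power[OF cx])
  also have "\<dots> = (p - 1) div k" using ox kd(1) by (simp add: gcd_nat.absorb1)
  also have "\<dots> = d" using kd(2) assms(1) p_gt
    by (metis div_mult_self1_is_m gr0I mult.commute mult_is_0 zero_less_diff)
  finally have oa: "ord p a = d" .
  have "coprime p (x ^ k)" using cx by simp
  have "\<not> p dvd x ^ k"
  proof
    assume "p dvd x ^ k"
    hence "p = 1" using coprime_common_divisor_nat[OF \<open>coprime p (x ^ k)\<close>] by simp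
    thus False using p_gt by simp
  qed
  hence "a \<noteq> 0" unfolding a_def by (simp add: dvd_eq_mod_eq_0)
  moreover have "a < p" using p_gt by (simp add: a_def)
  ultimately show ?thesis using oa by (intro exI[of _ "int a"]) auto
qed

end



context fp begin

lemma case_a:
  assumes d: "0 < d" "d dvd p^2 - 1"
  shows "\<exists>g. linmap p g \<and> bij_betw g (VV p) (VV p) \<and>
     cycle_lengths g (VV p) = replicate_mset ((p^2 - 1) div d) d + {#1#}"
proof -
  obtain s t where irr: "\<And>y. \<not> int p dvd y^2 - t * y - s" using irr_ex by blast
  define K where "K = Kr p s t"
  interpret K: field K unfolding K_def by (rule Kr_field[OF irr])
  have cK: "carrier K = VV p" and mK: "\<And>x y. x \<otimes>\<^bsub>K\<^esub> y = kmul p s t x y"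
    and aK: "\<And>x y. x \<oplus>\<^bsub>K\<^esub> y = vadd p x y" and zK: "\<zero>\<^bsub>K\<^esub> = (0, 0)"
    and oK: "\<one>\<^bsub>K\<^esub> = (1, 0)"
    by (simp_all add: K_def Kr_def)
  have finK: "finite (carrier K)" using cK by simp
  interpret G: group "mult_of K" by (rule K.field_mult_group)
  have powG: "\<And>x (n::nat). x [^]\<^bsub>mult_of K\<^esub> n = x [^]\<^bsub>K\<^esub> n" by (simp add: nat_pow_mult_of)
  have oG: "order (mult_of K) = p^2 - 1"
    using card_VV cK by (simp add: order_def card_Diff_singleton zK)
  have finG: "finite (carrier (mult_of K))" using finK by simp
  obtain \<gamma> where \<gamma>: "\<gamma> \<in> carrier (mult_of K)" "carrier (mult_of K) = {\<gamma> [^]\<^bsub>K\<^esub> i | i::nat. i \<in> UNIV}"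
    using K.finite_field_mult_group_has_gen[OF finK] by blast
  have ord\<gamma>: "G.ord \<gamma> = p^2 - 1"
  proof (rule antisym)
    show "G.ord \<gamma> \<le> p^2 - 1" using G.ord_le_group_order[OF finG \<gamma>(1)] oG by simp
    have "carrier (mult_of K) = {\<gamma> [^]\<^bsub>mult_of K\<^esub> i | i::nat. i \<in> UNIV}" using \<gamma>(2) powG by simp
    also have "\<dots> = {\<gamma> [^]\<^bsub>mult_of K\<^esub> x | x. x \<in> {0 .. G.ord \<gamma> - 1}}"
      by (rule G.ord_elems[OF finG \<gamma>(1)])
    also have "\<dots> = (\<lambda>x. \<gamma> [^]\<^bsub>mult_of K\<^esub> x) ` {0 .. G.ord \<gamma> - 1}" by auto
    finally have "order (mult_of K) \<le> card {0 .. G.ord \<gamma> - 1}"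
      unfolding order_def by (metis card_image_le finite_atLeastAtMost)
    also have "\<dots> \<le> G.ord \<gamma>" using G.ord_ge_1[OF finG \<gamma>(1)] by simp
    finally show "p^2 - 1 \<le> G.ord \<gamma>" using oG by simp
  qed
  define k where "k = (p^2 - 1) div d"
  have kd: "k * d = p^2 - 1" using d by (simp add: k_def)
  have "1 < p * p" using less_1_mult[OF p_gt(1) p_gt(1)] .
  hence pp: "0 < p^2 - 1" by (simp add: power2_eq_square)
  have k0: "k \<noteq> 0"
  proof
    assume "k = 0"
    hence "p^2 - 1 = 0" using kd by simp
    thus False using pp by simp
  qed
  define a where "a = \<gamma> [^]\<^bsub>mult_of K\<^esub> k"
  have aG: "a \<in> carrier (mult_of K)" unfolding a_def by (rule G.nat_pow_closed[OF \<gamma>(1)])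
  have oa: "G.ord a = d"
  proof -
    have "k dvd G.ord \<gamma>" using ord\<gamma> kd by (metis dvd_triv_left)
    hence "G.ord a = G.ord \<gamma> div k" unfolding a_def by (rule G.ord_pow[OF \<gamma>(1) _ k0])
    thus ?thesis using ord\<gamma> kd k0 by (metis nonzero_mult_div_cancel_left)
  qed
  have a: "a \<in> VV p" "a \<noteq> (0,0)" using aG cK zK by auto
  define g where "g z = kmul p s t a z" for z
  have gK: "g z = a \<otimes>\<^bsub>K\<^esub> z" for z by (simp add: g_def mK)
  have lin: "linmap p g"
    unfolding linmap_def
  proof (intro conjI ballI)
    fix u assume "u \<in> VV p" thus "g u \<in> VV p" by (simp add: g_def kmul_in)
  next
    fix u w assume uw: "u \<in> VV p" "w \<in> VV p"
    show "g (vadd p u w) = vadd p (g u) (g w)"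
      using uw a cK by (simp add: gK K.r_distr flip: aK)
  qed
  have inj: "inj_on g (VV p)"
    unfolding inj_on_def gK using K.m_lcancel a cK zK by auto
  have bij: "bij_betw g (VV p) (VV p)" using lin inj by (intro endo_bij) (auto simp: linmap_def)
  have pf: "perm_fin g (VV p)" using bij by unfold_locales auto
  have it: "(g ^^ n) z = a [^]\<^bsub>K\<^esub> n \<otimes>\<^bsub>K\<^esub> z" if "z \<in> VV p" for n z
  proof (induction n)
    case 0 thus ?case using that cK by simp
  next
    case (Suc n)
    have "(g ^^ Suc n) z = g ((g ^^ n) z)" by simp
    also have "\<dots> = g (a [^]\<^bsub>K\<^esub> n \<otimes>\<^bsub>K\<^esub> z)" using Suc.IH by simp
    also have "\<dots> = a \<otimes>\<^bsub>K\<^esub> (a [^]\<^bsub>K\<^esub> n \<otimes>\<^bsub>K\<^esub> z)" by (rule gK)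
    also have "\<dots> = a [^]\<^bsub>K\<^esub> Suc n \<otimes>\<^bsub>K\<^esub> z"
    proof -
      have aK': "a \<in> carrier K" "z \<in> carrier K" "a [^]\<^bsub>K\<^esub> n \<in> carrier K"
        using a that cK by auto
      have "a \<otimes>\<^bsub>K\<^esub> (a [^]\<^bsub>K\<^esub> n \<otimes>\<^bsub>K\<^esub> z)
          = (a \<otimes>\<^bsub>K\<^esub> a [^]\<^bsub>K\<^esub> n) \<otimes>\<^bsub>K\<^esub> z"
        using K.m_assoc[OF aK'(1,3,2)] by simp
      also have "a \<otimes>\<^bsub>K\<^esub> a [^]\<^bsub>K\<^esub> n = a [^]\<^bsub>K\<^esub> Suc n"
        using K.m_comm[OF aK'(1,3)] K.nat_pow_Suc by simp
      finally show ?thesis .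
    qed
    finally show ?case .
  qed
  have cyc: "card (cycle_of g v) = d" if v: "v \<in> VV p" "v \<noteq> (0,0)" for v
  proof (rule perm_fin.card_cycle_dvd[OF pf v(1)])
    fix n
    have "(g ^^ n) v = v \<longleftrightarrow> a [^]\<^bsub>K\<^esub> n \<otimes>\<^bsub>K\<^esub> v = \<one>\<^bsub>K\<^esub> \<otimes>\<^bsub>K\<^esub> v"
      using it[OF v(1)] v cK by simp
    also have "\<dots> \<longleftrightarrow> a [^]\<^bsub>K\<^esub> n = \<one>\<^bsub>K\<^esub>"
    proof -
      have vK: "v \<in> carrier K" "v \<noteq> \<zero>\<^bsub>K\<^esub>" using v cK zK by auto
      have "a \<in> carrier K" using a cK by simp
      hence anK: "a [^]\<^bsub>K\<^esub> n \<in> carrier K" by (rule K.nat_pow_closed)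
      show ?thesis by (rule K.m_rcancel[OF vK(2) vK(1) anK K.one_closed])
    qed
    also have "\<dots> \<longleftrightarrow> a [^]\<^bsub>mult_of K\<^esub> n = \<one>\<^bsub>mult_of K\<^esub>" by (simp add: powG)
    also have "\<dots> \<longleftrightarrow> d dvd n" using G.pow_eq_id[OF aG] oa by simp
    finally show "(g ^^ n) v = v \<longleftrightarrow> d dvd n" .
  qed
  have g0: "g (0,0) = (0,0)" using gK a cK zK by (metis K.r_null)
  have "cycle_lengths g (VV p) = replicate_mset ((p^2 - 1) div d) d + {#1#}"
    using cl_zero_split[OF pf g0 cyc] by blast
  thus ?thesis using lin bij by blast
qed

end



lemma transport:
  assumes H: "group H" and h: "bij_betw h A (carrier H)"
  defines "op \<equiv> (\<lambda>x y. inv_into A h (h x \<otimes>\<^bsub>H\<^esub> h y))"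
    and "e \<equiv> inv_into A h \<one>\<^bsub>H\<^esub>"
  shows "group (mk_group A op e)" "h \<in> iso (mk_group A op e) H"
proof -
  interpret H: group H by fact
  have hA: "x \<in> A \<Longrightarrow> h x \<in> carrier H" for x using h bij_betwE by blast
  have iA: "y \<in> carrier H \<Longrightarrow> inv_into A h y \<in> A" for y
    using h by (metis bij_betw_def inv_into_into)
  have hi: "y \<in> carrier H \<Longrightarrow> h (inv_into A h y) = y" for y
    using h by (metis bij_betw_def f_inv_into_f)
  have ih: "x \<in> A \<Longrightarrow> inv_into A h (h x) = x" for x
    using h by (metis bij_betw_def inv_into_f_f)
  have cG: "carrier (mk_group A op e) = A" and mG: "\<And>x y. x \<otimes>\<^bsub>mk_group A op e\<^esub> y = op x y"
    and oG: "\<one>\<^bsub>mk_group A op e\<^esub> = e"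
    by (simp_all add: mk_group_def)
  have hop: "x \<in> A \<Longrightarrow> y \<in> A \<Longrightarrow> h (op x y) = h x \<otimes>\<^bsub>H\<^esub> h y" for x y
    by (simp add: op_def hi hA)
  have opA: "x \<in> A \<Longrightarrow> y \<in> A \<Longrightarrow> op x y \<in> A" for x y by (simp add: op_def iA hA)
  have eA: "e \<in> A" by (simp add: e_def iA)
  have he: "h e = \<one>\<^bsub>H\<^esub>" by (simp add: e_def hi)
  have inj: "inj_on h A" using h bij_betw_def by blast
  have eq: "x \<in> A \<Longrightarrow> y \<in> A \<Longrightarrow> h x = h y \<Longrightarrow> x = y" for x y using inj inj_onD by metis
  have assoc: "op (op x y) z = op x (op y z)" if a: "x \<in> A" "y \<in> A" "z \<in> A" for x y z
  proof -
    have "h (op (op x y) z) = h (op x (op y z))"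
      using a by (simp add: hop opA hA H.m_assoc)
    thus "op (op x y) z = op x (op y z)"
      by (rule eq[OF opA[OF opA[OF a(1,2)] a(3)] opA[OF a(1) opA[OF a(2,3)]]])
  qed
  show grp: "group (mk_group A op e)"
  proof (rule groupI)
    fix x y assume "x \<in> carrier (mk_group A op e)" "y \<in> carrier (mk_group A op e)"
    thus "x \<otimes>\<^bsub>mk_group A op e\<^esub> y \<in> carrier (mk_group A op e)" using opA cG mG by simp
  next
    show "\<one>\<^bsub>mk_group A op e\<^esub> \<in> carrier (mk_group A op e)" using eA cG oG by simp
  next
    fix x y z assume xyz: "x \<in> carrier (mk_group A op e)" "y \<in> carrier (mk_group A op e)"
      "z \<in> carrier (mk_group A op e)"
    hence a: "x \<in> A" "y \<in> A" "z \<in> A" using cG by auto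
    have "op (op x y) z = op x (op y z)" by (rule assoc[OF a])
    thus "x \<otimes>\<^bsub>mk_group A op e\<^esub> y \<otimes>\<^bsub>mk_group A op e\<^esub> z =
          x \<otimes>\<^bsub>mk_group A op e\<^esub> (y \<otimes>\<^bsub>mk_group A op e\<^esub> z)" using mG by simp
  next
    fix x assume "x \<in> carrier (mk_group A op e)"
    hence a: "x \<in> A" using cG by auto
    have "h (op e x) = h x" using a eA by (simp add: hop he hA)
    hence "op e x = x" by (rule eq[OF opA[OF eA a] a])
    thus "\<one>\<^bsub>mk_group A op e\<^esub> \<otimes>\<^bsub>mk_group A op e\<^esub> x = x" using mG oG by simp
  next
    fix x assume "x \<in> carrier (mk_group A op e)"
    hence a: "x \<in> A" using cG by auto
    define y where "y = inv_into A h (inv\<^bsub>H\<^esub> (h x))"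
    have yA: "y \<in> A" using a hA iA y_def by simp
    have "h (op y x) = h e" using a yA by (simp add: hop he hA y_def hi)
    hence "op y x = e" by (rule eq[OF opA[OF yA a] eA])
    thus "\<exists>y\<in>carrier (mk_group A op e). y \<otimes>\<^bsub>mk_group A op e\<^esub> x = \<one>\<^bsub>mk_group A op e\<^esub>"
      using yA cG mG oG by auto
  qed
  show "h \<in> iso (mk_group A op e) H"
  proof (rule isoI)
    show "h \<in> hom (mk_group A op e) H"
      unfolding hom_def using hA hop cG mG by auto
    show "bij_betw h (carrier (mk_group A op e)) (carrier H)" using h cG by simp
  qed
qed

abbreviation PP :: "nat \<Rightarrow> (int \<times> int) monoid" where
  "PP p \<equiv> integer_mod_group p \<times>\<times> integer_mod_group p"

context fp begin

lemma cPP: "carrier (PP p) = VV p"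
  using p_gt by (simp add: carrier_integer_mod_group VV_def)

lemma mPP: "u \<otimes>\<^bsub>PP p\<^esub> w = vadd p u w"
  by (cases u, cases w) (simp add: vadd_def)

lemma grpPP: "group (PP p)" by (simp add: DirProd_group)

lemma iso_lin: "g \<in> iso (PP p) (PP p) \<longleftrightarrow> linmap p g \<and> bij_betw g (VV p) (VV p)"
  unfolding iso_def hom_def linmap_def bij_betw_def cPP mPP by auto

lemma perm_id_cl: assumes "perm_fin f A" "\<forall>x\<in>A. f x = x"
  shows "cycle_lengths f A = replicate_mset (card A) 1"
proof -
  interpret perm_fin f A by fact
  have "(f ^^ n) x = x" if "x \<in> A" for x n using assms(2) that by (induction n) auto
  hence "card (cycle_of f x) = 1" if "x \<in> A" for x
    using that by (intro card_cycle_dvd) auto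
  thus ?thesis using cl_const[OF inv_set_A] by simp
qed

end



theorem theorem2p5:
  fixes p :: nat and A :: "'a set" and f :: "'a \<Rightarrow> 'a"
  assumes "prime p" and "finite A" and "card A = p ^ 2" and "bij_betw f A A"
  shows "(\<exists>op e. group (mk_group A op e)
                 \<and> mk_group A op e \<cong> (integer_mod_group p \<times>\<times> integer_mod_group p)
                 \<and> f \<in> iso (mk_group A op e) (mk_group A op e))
     \<longleftrightarrow> ((\<forall>x\<in>A. f x = x)
         \<or> (\<exists>d. 0 < d \<and> d dvd p ^ 2 - 1 \<and>
               cycle_lengths f A = replicate_mset ((p ^ 2 - 1) div d) d + {#1#})
         \<or> (\<exists>d. 0 < d \<and> d dvd p - 1 \<and>
               cycle_lengths f A = replicate_mset ((p - 1) div d) (p * d)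
                                 + replicate_mset ((p - 1) div d) d + {#1#})
         \<or> (\<exists>d1 d2. 0 < d1 \<and> 0 < d2 \<and> d1 dvd p - 1 \<and> d2 dvd p - 1 \<and>
               cycle_lengths f A = replicate_mset ((p - 1) ^ 2 div lcm d1 d2) (lcm d1 d2)
                                 + replicate_mset ((p - 1) div d1) d1
                                 + replicate_mset ((p - 1) div d2) d2 + {#1#}))"
proof -
  interpret fp p using assms(1) by unfold_locales
  have pfA: "perm_fin f A" using assms(2,4) by unfold_locales
  show ?thesis
  proof
    assume "\<exists>op e. group (mk_group A op e)
                 \<and> mk_group A op e \<cong> (integer_mod_group p \<times>\<times> integer_mod_group p)
                 \<and> f \<in> iso (mk_group A op e) (mk_group A op e)"
    then obtain op e where G: "group (mk_group A op e)"
      and GP: "mk_group A op e \<cong> PP p" and fG: "f \<in> iso (mk_group A op e) (mk_group A op e)"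
      by blast
    define G where "G = mk_group A op e"
    have cG: "carrier G = A" by (simp add: G_def mk_group_def)
    obtain \<phi> where \<phi>: "\<phi> \<in> iso G (PP p)" using GP unfolding is_iso_def G_def by blast
    interpret G: group G using G G_def by simp
    define \<psi> where "\<psi> = inv_into (carrier G) \<phi>"
    have \<psi>: "\<psi> \<in> iso (PP p) G" unfolding \<psi>_def by (rule G.iso_set_sym[OF \<phi>])
    have "f \<circ> \<psi> \<in> iso (PP p) G" using iso_set_trans[OF \<psi>] fG G_def by simp
    hence giso: "\<phi> \<circ> (f \<circ> \<psi>) \<in> iso (PP p) (PP p)" using iso_set_trans \<phi> by blast
    define g where "g = \<phi> \<circ> (f \<circ> \<psi>)"
    have lg: "linmap p g" "bij_betw g (VV p) (VV p)" using giso iso_lin g_def by auto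
    have b\<phi>: "bij_betw \<phi> A (VV p)" using \<phi> cG cPP by (simp add: iso_def)
    have comm: "\<phi> (f x) = g (\<phi> x)" if "x \<in> A" for x
    proof -
      have "inj_on \<phi> (carrier G)" using b\<phi> cG bij_betw_def by blast
      hence "\<psi> (\<phi> x) = x" using that cG \<psi>_def by (simp add: inv_into_f_f)
      thus ?thesis by (simp add: g_def)
    qed
    have "cycle_lengths g (VV p) = cycle_lengths f A" by (rule cl_conj[OF pfA b\<phi> comm])
    moreover have "good p (cycle_lengths g (VV p))" by (rule classify[OF lg])
    ultimately have "good p (cycle_lengths f A)" by simp
    thus "(\<forall>x\<in>A. f x = x)
         \<or> (\<exists>d. 0 < d \<and> d dvd p ^ 2 - 1 \<and>
               cycle_lengths f A = replicate_mset ((p ^ 2 - 1) div d) d + {#1#})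
         \<or> (\<exists>d. 0 < d \<and> d dvd p - 1 \<and>
               cycle_lengths f A = replicate_mset ((p - 1) div d) (p * d)
                                 + replicate_mset ((p - 1) div d) d + {#1#})
         \<or> (\<exists>d1 d2. 0 < d1 \<and> 0 < d2 \<and> d1 dvd p - 1 \<and> d2 dvd p - 1 \<and>
               cycle_lengths f A = replicate_mset ((p - 1) ^ 2 div lcm d1 d2) (lcm d1 d2)
                                 + replicate_mset ((p - 1) div d1) d1
                                 + replicate_mset ((p - 1) div d2) d2 + {#1#})"
      unfolding good_def by blast
  next
    assume H: "(\<forall>x\<in>A. f x = x)
         \<or> (\<exists>d. 0 < d \<and> d dvd p ^ 2 - 1 \<and>
               cycle_lengths f A = replicate_mset ((p ^ 2 - 1) div d) d + {#1#})
         \<or> (\<exists>d. 0 < d \<and> d dvd p - 1 \<and>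
               cycle_lengths f A = replicate_mset ((p - 1) div d) (p * d)
                                 + replicate_mset ((p - 1) div d) d + {#1#})
         \<or> (\<exists>d1 d2. 0 < d1 \<and> 0 < d2 \<and> d1 dvd p - 1 \<and> d2 dvd p - 1 \<and>
               cycle_lengths f A = replicate_mset ((p - 1) ^ 2 div lcm d1 d2) (lcm d1 d2)
                                 + replicate_mset ((p - 1) div d1) d1
                                 + replicate_mset ((p - 1) div d2) d2 + {#1#})"
    have "\<exists>g. linmap p g \<and> bij_betw g (VV p) (VV p) \<and> cycle_lengths g (VV p) = cycle_lengths f A"
    proof -
      { assume idf: "\<forall>x\<in>A. f x = x"
        have pfi: "perm_fin (\<lambda>z. z) (VV p)" by unfold_locales (auto simp: bij_betw_def)
        have "cycle_lengths (\<lambda>z. z) (VV p) = replicate_mset (card (VV p)) 1"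
          by (rule perm_id_cl[OF pfi]) auto
        moreover have "cycle_lengths f A = replicate_mset (card A) 1"
          by (rule perm_id_cl[OF pfA idf])
        ultimately have ?thesis using lin_id card_VV assms(3)
          by (intro exI[of _ "\<lambda>z. z"]) (auto simp: bij_betw_def) }
      moreover
      { fix d assume d: "0 < d" "d dvd p ^ 2 - 1"
          "cycle_lengths f A = replicate_mset ((p ^ 2 - 1) div d) d + {#1#}"
        have ?thesis using case_a[OF d(1,2)] d(3) by metis }
      moreover
      { fix d assume d: "0 < d" "d dvd p - 1"
          "cycle_lengths f A = replicate_mset ((p - 1) div d) (p * d)
                                 + replicate_mset ((p - 1) div d) d + {#1#}"
        obtain l where l: "0 < l" "l < int p" "ord p (nat l) = d" using scal_ord[OF d(1,2)] by blast
        have pf: "perm_fin (Jm p l) (VV p)" by (rule Jm_cl(1)[OF l(1,2)])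
        have "cycle_lengths (Jm p l) (VV p) = cycle_lengths f A"
          using Jm_cl(2)[OF l(1,2)] l(3) d(3) by simp
        hence ?thesis using lin_Jm pf perm_fin.bij by blast }
      moreover
      { fix d1 d2 assume d: "0 < d1" "0 < d2" "d1 dvd p - 1" "d2 dvd p - 1"
          "cycle_lengths f A = replicate_mset ((p - 1) ^ 2 div lcm d1 d2) (lcm d1 d2)
                                 + replicate_mset ((p - 1) div d1) d1
                                 + replicate_mset ((p - 1) div d2) d2 + {#1#}"
        obtain l where l: "0 < l" "l < int p" "ord p (nat l) = d1" using scal_ord[OF d(1,3)] by blast
        obtain m where m: "0 < m" "m < int p" "ord p (nat m) = d2" using scal_ord[OF d(2,4)] by blast
        have pf: "perm_fin (Dm p l m) (VV p)" by (rule Dm_cl(1)[OF l(1,2) m(1,2)])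
        have "cycle_lengths (Dm p l m) (VV p) = cycle_lengths f A"
          using Dm_cl(2)[OF l(1,2) m(1,2)] l(3) m(3) d(5) by simp
        hence ?thesis using lin_Dm pf perm_fin.bij by blast }
      ultimately show ?thesis using H by blast
    qed
    then obtain g where g: "linmap p g" "bij_betw g (VV p) (VV p)"
      "cycle_lengths g (VV p) = cycle_lengths f A" by blast
    have pfg: "perm_fin g (VV p)" using g(2) by unfold_locales auto
    obtain h where h: "bij_betw h A (VV p)" "\<And>x. x \<in> A \<Longrightarrow> h (f x) = g (h x)"
      using conj_exists[OF pfA pfg g(3)[symmetric]] by blast
    have hP: "bij_betw h A (carrier (PP p))" using h(1) cPP by simp
    define op where "op = (\<lambda>x y. inv_into A h (h x \<otimes>\<^bsub>PP p\<^esub> h y))"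
    define e where "e = inv_into A h \<one>\<^bsub>PP p\<^esub>"
    have G: "group (mk_group A op e)" and hiso: "h \<in> iso (mk_group A op e) (PP p)"
      using transport[OF grpPP hP] op_def e_def by auto
    interpret G: group "mk_group A op e" by (rule G)
    have cG: "carrier (mk_group A op e) = A" by (simp add: mk_group_def)
    have giso: "g \<in> iso (PP p) (PP p)" using iso_lin g(1,2) by simp
    define \<psi> where "\<psi> = inv_into (carrier (mk_group A op e)) h"
    have \<psi>: "\<psi> \<in> iso (PP p) (mk_group A op e)" unfolding \<psi>_def by (rule G.iso_set_sym[OF hiso])
    have "\<psi> \<circ> (g \<circ> h) \<in> iso (mk_group A op e) (mk_group A op e)"
      using iso_set_trans[OF iso_set_trans[OF hiso giso] \<psi>] by simp
    moreover have "f x = (\<psi> \<circ> (g \<circ> h)) x" if "x \<in> carrier (mk_group A op e)" for x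
    proof -
      have x: "x \<in> A" using that cG by simp
      have fx: "f x \<in> A" using assms(4) x bij_betwE by blast
      have "(\<psi> \<circ> (g \<circ> h)) x = \<psi> (h (f x))" using h(2)[OF x] by simp
      also have "\<dots> = f x" unfolding \<psi>_def cG using fx h(1) by (simp add: bij_betw_def inv_into_f_f)
      finally show ?thesis by simp
    qed
    ultimately have "f \<in> iso (mk_group A op e) (mk_group A op e)" by (rule G.iso_eq)
    moreover have "mk_group A op e \<cong> PP p" using hiso by (rule is_isoI)
    ultimately show "\<exists>op e. group (mk_group A op e)
                 \<and> mk_group A op e \<cong> (integer_mod_group p \<times>\<times> integer_mod_group p)
                 \<and> f \<in> iso (mk_group A op e) (mk_group A op e)"
      using G by blast
  qed
qed


end
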